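(* Let $X$ be a weak complicial set, $x\in X_0$ a vertex and $n\ge1$. Define a multiplication on $\tau_n(X,x)$ by $[\alpha][\beta]=[d_n\theta]$, where $\theta:\Delta^n[n+1]\to X$ is any stratified map with $d_{n-1}\theta=\alpha$, $d_{n+1}\theta=\beta$ and $d_i\theta$ constant at $x$ for $i\notin\{n-1,n,n+1\}$ (such $\theta$ exists by lifting along $\Lambda^n[n+1]\hookrightarrow\Delta^n[n+1]$, and the class $[d_n\theta]$ depends only on $[\alpha],[\beta]$). Then this multiplication makes $\tau_n(X,x)$ a monoid, whose unit is the class of the constant $n$-simplex at $x$.
   Context: A stratified simplicial set is a pair $(X,tX)$ where $X$ is a simplicial set and $tX$ is a set of simplices of $X$ (thin simplices) containing all degenerate simplices and no $0$-simplices; stratified maps are simplicial maps preserving thin simplices. A regular stratified subset $(X,tX)\subset(Y,tY)$ means $X\subset Y$, $tX=X\cap tY$. For $n\ge1$, $\Delta[n]_t$ is $\Delta[n]$ with thin simplices the degenerate ones and $\mathrm{Id}_{[n]}$. For $k\in[n]$, $\Delta^k[n]$ is $\Delta[n]$ with thin simplices the degenerate ones and all $\alpha:[m]\to[n]$ with $\{k-1,k,k+1\}\cap[n]\subset\mathrm{Im}(\alpha)$; $\Lambda^k[n]$ is the regular stratified subset of $\Delta^k[n]$ generated by the faces $\delta_i$, $i\neq k$; $\Delta^k[n]''$ (resp. $\Lambda^k[n]'$) is $\Delta^k[n]$ (resp. $\Lambda^k[n]$) with additionally all its $(n-1)$-simplices thin; $\Delta^k[n]'=\Delta^k[n]\cup\Lambda^k[n]'$.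 A weak complicial set is a stratified simplicial set with the right lifting property against $\Lambda^k[n]\hookrightarrow\Delta^k[n]$ ($n\ge1$, $k\in[n]$) and $\Delta^k[n]'\hookrightarrow\Delta^k[n]''$ ($n\ge2$, $k\in[n]$). The product $X\circledast Y$ has underlying simplicial set $X\times Y$, with $(x,y)$ thin iff $x$ and $y$ are thin. For stratified maps $f,g:A\to X$ and an inclusion $B\hookrightarrow A$ with $f|_B=g|_B$, $f\sim_B g$ means there is a stratified map $H:A\circledast\Delta[1]_t\to X$ with $H|_{A\times\{0\}}=f$, $H|_{A\times\{1\}}=g$ and $H|_{B\circledast\Delta[1]_t}=f|_B\circ\mathrm{proj}_B$. Here $n$-simplices of $X$ are regarded as stratified maps $\Delta[n]\to X$ where $\Delta[n]$ carries the stratification with only degenerate simplices thin. For $n\ge1$, $\tau_n(X,x)$ (the $n$-th homotopy monoid) is the set of equivalence classes under $\sim_{\partial\Delta[n]}$ of $n$-simplices $\alpha$ of $X$ whose restriction to $\partial\Delta[n]$ is constant at $x$. *)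

theory Defs
  imports "HOL-Algebra.Group"
begin

text \<open>A monotone map [m] -> [n] is represented by the list of its values
  (a sorted list of length m+1 with entries at most n).\<close>

definition mono_op :: "nat \<Rightarrow> nat \<Rightarrow> nat list \<Rightarrow> bool" where
  "mono_op m n f \<longleftrightarrow> length f = Suc m \<and> sorted f \<and> (\<forall>i\<in>set f. i \<le> n)"

definition face :: "nat \<Rightarrow> nat \<Rightarrow> nat list" where
  "face n i = [0..<i] @ [Suc i..<Suc n]"

text \<open>cells X m : the m-simplices; act X n f x : the simplicial operator f^* applied
  to an n-simplex x, for f : [m] -> [n]; thin X m : thin m-simplices.\<close>
record 'a sset =
  cells :: "nat \<Rightarrow> 'a set"
  act :: "nat \<Rightarrow> nat list \<Rightarrow> 'a \<Rightarrow> 'a"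
  thin :: "nat \<Rightarrow> 'a set"

definition degen :: "(nat \<Rightarrow> 'a set) \<Rightarrow> (nat \<Rightarrow> nat list \<Rightarrow> 'a \<Rightarrow> 'a) \<Rightarrow> nat \<Rightarrow> 'a \<Rightarrow> bool" where
  "degen C A m y \<longleftrightarrow> y \<in> C m \<and> (\<exists>k<m. \<exists>g z. mono_op m k g \<and> z \<in> C k \<and> y = A k g z)"

definition degenerate :: "('a, 'b) sset_scheme \<Rightarrow> nat \<Rightarrow> 'a \<Rightarrow> bool" where
  "degenerate X = degen (cells X) (act X)"

definition strat_sset :: "('a, 'b) sset_scheme \<Rightarrow> bool" where
  "strat_sset X \<longleftrightarrow>
     (\<forall>n m f x. x \<in> cells X n \<longrightarrow> mono_op m n f \<longrightarrow> act X n f x \<in> cells X m) \<and>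
     (\<forall>n x. x \<in> cells X n \<longrightarrow> act X n [0..<Suc n] x = x) \<and>
     (\<forall>n m k f g x. x \<in> cells X n \<longrightarrow> mono_op m n f \<longrightarrow> mono_op k m g \<longrightarrow>
        act X m g (act X n f x) = act X n (map (\<lambda>j. f ! j) g) x) \<and>
     (\<forall>m. thin X m \<subseteq> cells X m) \<and>
     (\<forall>m y. degenerate X m y \<longrightarrow> y \<in> thin X m) \<and>
     thin X 0 = {}"

definition smap :: "('a, 'c) sset_scheme \<Rightarrow> ('b, 'd) sset_scheme \<Rightarrow> ('a \<Rightarrow> 'b) \<Rightarrow> bool" where
  "smap A X F \<longleftrightarrow>
     (\<forall>m a. a \<in> cells A m \<longrightarrow> F a \<in> cells X m) \<and>
     (\<forall>m k g a. a \<in> cells A m \<longrightarrow> mono_op k m g \<longrightarrow> F (act A m g a) = act X m g (F a)) \<and>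
     (\<forall>m a. a \<in> thin A m \<longrightarrow> F a \<in> thin X m)"

definition sprod :: "('a, 'c) sset_scheme \<Rightarrow> ('b, 'd) sset_scheme \<Rightarrow> ('a \<times> 'b) sset" where
  "sprod A B = \<lparr>cells = (\<lambda>m. cells A m \<times> cells B m),
                act = (\<lambda>m g p. (act A m g (fst p), act B m g (snd p))),
                thin = (\<lambda>m. thin A m \<times> thin B m)\<rparr>"

definition Dcells :: "nat \<Rightarrow> nat \<Rightarrow> nat list set" where
  "Dcells n m = {f. mono_op m n f}"

definition Dact :: "nat \<Rightarrow> nat list \<Rightarrow> nat list \<Rightarrow> nat list" where
  "Dact m g f = map (\<lambda>j. f ! j) g"

definition Delta_with :: "nat \<Rightarrow> (nat \<Rightarrow> nat list \<Rightarrow> bool) \<Rightarrow> nat list sset" where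
  "Delta_with n T = \<lparr>cells = Dcells n, act = Dact,
     thin = (\<lambda>m. {f \<in> Dcells n m. degen (Dcells n) Dact m f \<or> T m f})\<rparr>"

definition Delta :: "nat \<Rightarrow> nat list sset" where
  "Delta n = Delta_with n (\<lambda>m f. False)"

definition Delta_t :: "nat \<Rightarrow> nat list sset" where
  "Delta_t n = Delta_with n (\<lambda>m f. f = [0..<Suc n])"

definition Dk :: "nat \<Rightarrow> nat \<Rightarrow> nat list sset" where
  "Dk k n = Delta_with n (\<lambda>m f. {i. i \<le> n \<and> (Suc i = k \<or> i = k \<or> i = Suc k)} \<subseteq> set f)"

definition Hcells :: "nat \<Rightarrow> nat \<Rightarrow> nat \<Rightarrow> nat list set" where
  "Hcells k n m = {f \<in> Dcells n m. \<exists>i\<le>n. i \<noteq> k \<and> i \<notin> set f}"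

definition Horn :: "nat \<Rightarrow> nat \<Rightarrow> nat list sset" where
  "Horn k n = \<lparr>cells = Hcells k n, act = Dact,
     thin = (\<lambda>m. Hcells k n m \<inter> thin (Dk k n) m)\<rparr>"

definition Dk'' :: "nat \<Rightarrow> nat \<Rightarrow> nat list sset" where
  "Dk'' k n = \<lparr>cells = Dcells n, act = Dact,
     thin = (\<lambda>m. thin (Dk k n) m \<union> (if m = n - 1 then Dcells n m else {}))\<rparr>"

definition Dk' :: "nat \<Rightarrow> nat \<Rightarrow> nat list sset" where
  "Dk' k n = \<lparr>cells = Dcells n, act = Dact,
     thin = (\<lambda>m. thin (Dk k n) m \<union> (if m = n - 1 then Hcells k n m else {}))\<rparr>"

definition has_rlp :: "nat list sset \<Rightarrow> nat list sset \<Rightarrow> ('a, 'b) sset_scheme \<Rightarrow> bool" where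
  "has_rlp A B X \<longleftrightarrow>
     (\<forall>F. smap A X F \<longrightarrow> (\<exists>G. smap B X G \<and> (\<forall>m a. a \<in> cells A m \<longrightarrow> G a = F a)))"

definition weak_complicial :: "('a, 'b) sset_scheme \<Rightarrow> bool" where
  "weak_complicial X \<longleftrightarrow> strat_sset X \<and>
     (\<forall>n k. 1 \<le> n \<longrightarrow> k \<le> n \<longrightarrow> has_rlp (Horn k n) (Dk k n) X) \<and>
     (\<forall>n k. 2 \<le> n \<longrightarrow> k \<le> n \<longrightarrow> has_rlp (Dk' k n) (Dk'' k n) X)"

definition const :: "('a, 'b) sset_scheme \<Rightarrow> 'a \<Rightarrow> nat \<Rightarrow> 'a" where
  "const X x m = act X 0 (replicate (Suc m) 0) x"

definition sphere :: "('a, 'b) sset_scheme \<Rightarrow> nat \<Rightarrow> 'a \<Rightarrow> 'a set" where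
  "sphere X n x = {a \<in> cells X n. \<forall>m f. mono_op m n f \<longrightarrow> set f \<noteq> {0..n} \<longrightarrow>
                       act X n f a = const X x m}"

text \<open>a \<sim>_{boundary} b: a homotopy H : Delta[n] \<circledast> Delta[1]_t -> X rel boundary.
  The n-simplex a is regarded as the stratified map f \<mapsto> f^* a on Delta[n].\<close>
definition htpy :: "('a, 'b) sset_scheme \<Rightarrow> nat \<Rightarrow> 'a \<Rightarrow> 'a \<Rightarrow> bool" where
  "htpy X n a b \<longleftrightarrow> (\<exists>H. smap (sprod (Delta n) (Delta_t 1)) X H \<and>
     (\<forall>m f. f \<in> Dcells n m \<longrightarrow> H (f, replicate (Suc m) 0) = act X n f a) \<and>
     (\<forall>m f. f \<in> Dcells n m \<longrightarrow> H (f, replicate (Suc m) 1) = act X n f b) \<and>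
     (\<forall>m f e. f \<in> Dcells n m \<longrightarrow> set f \<noteq> {0..n} \<longrightarrow> e \<in> Dcells 1 m \<longrightarrow>
        H (f, e) = act X n f a))"

definition hrel :: "('a, 'b) sset_scheme \<Rightarrow> nat \<Rightarrow> 'a \<Rightarrow> ('a \<times> 'a) set" where
  "hrel X n x = {(a, b). a \<in> sphere X n x \<and> b \<in> sphere X n x \<and>
     (\<lambda>u v. u \<in> sphere X n x \<and> v \<in> sphere X n x \<and> (htpy X n u v \<or> htpy X n v u))\<^sup>*\<^sup>* a b}"

definition tau :: "('a, 'b) sset_scheme \<Rightarrow> nat \<Rightarrow> 'a \<Rightarrow> 'a set set" where
  "tau X n x = sphere X n x // hrel X n x"

definition hclass :: "('a, 'b) sset_scheme \<Rightarrow> nat \<Rightarrow> 'a \<Rightarrow> 'a \<Rightarrow> 'a set" where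
  "hclass X n x a = hrel X n x `` {a}"

definition filler :: "('a, 'b) sset_scheme \<Rightarrow> nat \<Rightarrow> 'a \<Rightarrow> 'a \<Rightarrow> 'a \<Rightarrow> (nat list \<Rightarrow> 'a) \<Rightarrow> bool" where
  "filler X n x a b \<theta> \<longleftrightarrow> smap (Dk n (Suc n)) X \<theta> \<and>
     \<theta> (face (Suc n) (n - 1)) = a \<and> \<theta> (face (Suc n) (Suc n)) = b \<and>
     (\<forall>i\<le>Suc n. i \<notin> {n - 1, n, Suc n} \<longrightarrow> \<theta> (face (Suc n) i) = const X x n)"

definition tau_mult :: "('a, 'b) sset_scheme \<Rightarrow> nat \<Rightarrow> 'a \<Rightarrow> 'a set \<Rightarrow> 'a set \<Rightarrow> 'a set" where
  "tau_mult X n x A B = (THE C. \<exists>a\<in>A. \<exists>b\<in>B. \<exists>\<theta>. filler X n x a b \<theta> \<and>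
                              C = hclass X n x (\<theta> (face (Suc n) n)))"

definition tau_monoid :: "('a, 'b) sset_scheme \<Rightarrow> nat \<Rightarrow> 'a \<Rightarrow> 'a set monoid" where
  "tau_monoid X n x = \<lparr>carrier = tau X n x, mult = tau_mult X n x,
                       one = hclass X n x (const X x n)\<rparr>"

end

theory Submission
  imports Defs
begin

lemma mono_opD: "mono_op m n f \<Longrightarrow> length f = Suc m \<and> sorted f \<and> (\<forall>i\<in>set f. i \<le> n)"
  by (simp add: mono_op_def)

lemma mono_op_nth: "mono_op m n f \<Longrightarrow> t \<le> m \<Longrightarrow> f ! t \<le> n"
  unfolding mono_op_def by (metis le_imp_less_Suc nth_mem)

lemma mono_op_Dact:
  assumes "mono_op k m g" "mono_op m n f"
  shows "mono_op k n (map (\<lambda>j. f ! j) g)"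
proof -
  have g: "length g = Suc k" "sorted g" "\<forall>i\<in>set g. i \<le> m" using assms(1) by (auto simp: mono_op_def)
  have f: "length f = Suc m" "sorted f" "\<forall>i\<in>set f. i \<le> n" using assms(2) by (auto simp: mono_op_def)
  have "sorted (map (\<lambda>j. f ! j) g)"
    unfolding sorted_iff_nth_mono
  proof (intro allI impI)
    fix i j assume ij: "i \<le> j" "j < length (map (\<lambda>j. f ! j) g)"
    then have "g ! i \<le> g ! j" using g(2) by (simp add: sorted_iff_nth_mono)
    moreover have "g ! j < length f" using g ij f(1) by (simp add: less_Suc_eq_le)
    ultimately show "map (\<lambda>j. f ! j) g ! i \<le> map (\<lambda>j. f ! j) g ! j"
      using ij f(2) by (simp add: sorted_iff_nth_mono)
  qed
  moreover have "\<forall>i\<in>set (map (\<lambda>j. f ! j) g). i \<le> n"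
    using g f by (auto simp: less_Suc_eq_le)
  ultimately show ?thesis using g by (simp add: mono_op_def)
qed

lemma mono_op_id: "mono_op n n [0..<Suc n]"
  by (simp add: mono_op_def del: upt_Suc)

lemma map_nth_id: "\<forall>i\<in>set g. i \<le> n \<Longrightarrow> map (\<lambda>j. [0..<Suc n] ! j) g = g"
  by (induct g) (auto simp: nth_upt less_Suc_eq_le simp del: upt_Suc)

lemma map_id_nth: "length f = Suc n \<Longrightarrow> map (\<lambda>j. f ! j) [0..<Suc n] = f"
  by (metis map_nth)

lemma length_face: "i \<le> n \<Longrightarrow> length (face n i) = n"
  by (simp add: face_def)

lemma nth_face: "i \<le> n \<Longrightarrow> v < n \<Longrightarrow> face n i ! v = (if v < i then v else Suc v)"
  by (auto simp: face_def nth_append)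

lemma set_face: "i \<le> n \<Longrightarrow> set (face n i) = {0..n} - {i}"
  by (auto simp: face_def)

lemma mono_op_face: "i \<le> Suc m \<Longrightarrow> mono_op m (Suc m) (face (Suc m) i)"
  by (auto simp: mono_op_def face_def sorted_append)

definition reidx :: "nat \<Rightarrow> nat list \<Rightarrow> nat list" where
  "reidx i f = map (\<lambda>v. if v < i then v else v - 1) f"

lemma face_reidx:
  assumes "i \<le> Suc m" "i \<notin> set g" "\<forall>v\<in>set g. v \<le> Suc m"
  shows "map (\<lambda>j. face (Suc m) i ! j) (reidx i g) = g"
  unfolding reidx_def using assms
  by (induct g) (auto simp: nth_face)

lemma mono_op_reidx:
  assumes "mono_op k (Suc m) g" "i \<le> Suc m" "i \<notin> set g"
  shows "mono_op k m (reidx i g)"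
proof -
  have g: "length g = Suc k" "sorted g" "\<forall>i\<in>set g. i \<le> Suc m" using assms(1) by (auto simp: mono_op_def)
  have "sorted (reidx i g)" unfolding reidx_def using g(2)
    by (induct g) (auto simp: sorted_append)
  moreover have "\<forall>v\<in>set (reidx i g). v \<le> m"
    unfolding reidx_def using g(3) assms(2,3) by fastforce
  ultimately show ?thesis using g by (simp add: mono_op_def reidx_def)
qed

lemma reidx_face: "i \<le> Suc m \<Longrightarrow> reidx i (face (Suc m) i) = [0..<Suc m]"
  by (rule nth_equalityI) (auto simp: reidx_def length_face nth_face nth_upt simp del: upt_Suc)

lemma reidx_Dact: "\<forall>j\<in>set g. j < length f \<Longrightarrow> reidx i (map (\<lambda>j. f ! j) g) = map (\<lambda>j. reidx i f ! j) g"
  by (auto simp: reidx_def)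

lemma face_face:
  assumes "i < j" "j \<le> Suc (Suc p)"
  shows "map (\<lambda>t. face (Suc (Suc p)) j ! t) (face (Suc p) i) =
         map (\<lambda>t. face (Suc (Suc p)) i ! t) (face (Suc p) (j - 1))"
  using assms by (intro nth_equalityI) (auto simp: length_face nth_face)

locale WC =
  fixes X :: "'a sset" and x :: 'a and n :: nat
  assumes wc: "weak_complicial X" and xc: "x \<in> cells X 0" and n1: "1 \<le> n"
begin

lemma strat: "strat_sset X" using wc by (simp add: weak_complicial_def)

lemma act_cells: "z \<in> cells X N \<Longrightarrow> mono_op m N f \<Longrightarrow> act X N f z \<in> cells X m"
  using strat by (simp add: strat_sset_def)

lemma act_id: "z \<in> cells X N \<Longrightarrow> act X N [0..<Suc N] z = z"
  using strat unfolding strat_sset_def by blast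

lemma act_comp: "z \<in> cells X N \<Longrightarrow> mono_op m N f \<Longrightarrow> mono_op k m g \<Longrightarrow>
   act X m g (act X N f z) = act X N (map (\<lambda>j. f ! j) g) z"
  using strat unfolding strat_sset_def by blast

lemma thin_cells: "y \<in> thin X m \<Longrightarrow> y \<in> cells X m"
  using strat unfolding strat_sset_def by blast

lemma degen_thin: "degenerate X m y \<Longrightarrow> y \<in> thin X m"
  using strat unfolding strat_sset_def by blast

definition ix :: "nat list \<Rightarrow> nat \<Rightarrow> nat" where "ix h v = (LEAST i. i < length h \<and> h ! i = v)"

lemma ix_props: "v \<in> set h \<Longrightarrow> ix h v < length h \<and> h ! ix h v = v"
  unfolding ix_def by (rule LeastI_ex) (simp add: in_set_conv_nth)

lemma index_mono:
  assumes "sorted_wrt (<) h" "v \<in> set h" "v' \<in> set h" "v \<le> v'"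
  shows "ix h v \<le> ix h v'"
proof (rule ccontr)
  assume "\<not> ?thesis"
  then have "ix h v' < ix h v" by simp
  moreover have "ix h v < length h" using assms(2) ix_props by blast
  ultimately have "h ! ix h v' < h ! ix h v" using assms(1) sorted_wrt_nth_less by blast
  then show False using assms ix_props by simp
qed

lemma DG:
  assumes z: "z \<in> cells X N" and g: "mono_op m N g" and nd: "\<not> distinct g"
  shows "act X N g z \<in> thin X m"
proof -
  define h where "h = sorted_list_of_set (set g)"
  define g2 where "g2 = map (ix h) g"
  define k where "k = length h - 1"
  have gl: "length g = Suc m" "sorted g" "\<forall>i\<in>set g. i \<le> N" using g by (auto simp: mono_op_def)
  have hs: "sorted_wrt (<) h" "set h = set g" "distinct h" using h_def by auto
  have lh: "length h = card (set g)" using h_def by simp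
  have "card (set g) < length g" using nd card_distinct[of g] card_length[of g] by linarith
  then have lhm: "length h \<le> m" using lh gl by simp
  have "g \<noteq> []" using gl by auto
  then have "length h \<ge> 1" using lh by (simp add: Suc_leI card_gt_0_iff)
  then have lhk: "length h = Suc k" using k_def by simp
  have km: "k < m" using lhm lhk by simp
  have hmono: "mono_op k N h" using lhk hs gl unfolding mono_op_def
    by (simp add: h_def)
  have g2mono: "mono_op m k g2"
  proof -
    have "sorted g2" unfolding sorted_iff_nth_mono
    proof (intro allI impI)
      fix i j assume ij: "i \<le> j" "j < length g2"
      then have "g ! i \<le> g ! j" using gl(2) by (simp add: sorted_iff_nth_mono g2_def)
      then show "g2 ! i \<le> g2 ! j" using ij hs index_mono[OF hs(1)] gl by (simp add: g2_def)
    qed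
    moreover have "\<forall>v\<in>set g2. v \<le> k" using lhk hs ix_props by (fastforce simp: g2_def less_Suc_eq_le[symmetric])
    ultimately show ?thesis using gl by (simp add: mono_op_def g2_def)
  qed
  have gg: "map (\<lambda>j. h ! j) g2 = g" using hs ix_props by (simp add: g2_def map_idI)
  have eq: "act X N g z = act X k g2 (act X N h z)"
    using act_comp[OF z hmono g2mono] gg by simp
  have "degenerate X m (act X N g z)"
    unfolding degenerate_def degen_def
    using act_cells[OF z g] km g2mono act_cells[OF z hmono] eq by blast
  then show ?thesis by (rule degen_thin)
qed

lemma replicate_mono: "mono_op m 0 (replicate (Suc m) 0)"
  by (simp add: mono_op_def)

lemma const_cells: "const X x m \<in> cells X m"
  unfolding const_def by (rule act_cells[OF xc replicate_mono])

lemma const_act: "mono_op m' m g \<Longrightarrow> act X m g (const X x m) = const X x m'"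
proof -
  assume g: "mono_op m' m g"
  have "map (\<lambda>j. replicate (Suc m) (0::nat) ! j) g = replicate (Suc m') 0"
  proof (intro nth_equalityI)
    fix i assume "i < length (map (\<lambda>j. replicate (Suc m) (0::nat) ! j) g)"
    then have "i < length g" by simp
    then have "g ! i \<le> m" using g unfolding mono_op_def by auto
    then show "map (\<lambda>j. replicate (Suc m) (0::nat) ! j) g ! i = replicate (Suc m') 0 ! i"
    proof -
      have "replicate (Suc m) (0::nat) ! (g ! i) = 0" using \<open>g ! i \<le> m\<close> by (simp only: nth_replicate le_imp_less_Suc)
      then show ?thesis using \<open>i < length g\<close> g unfolding mono_op_def by (simp del: replicate_Suc)
    qed
  qed (use g in \<open>simp add: mono_op_def\<close>)
  then show ?thesis unfolding const_def using act_comp[OF xc replicate_mono g] by simp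
qed

lemma const_thin: "1 \<le> m \<Longrightarrow> const X x m \<in> thin X m"
proof -
  assume m: "1 \<le> m"
  have "degenerate X m (const X x m)"
    unfolding degenerate_def degen_def const_def
    using act_cells[OF xc replicate_mono] m replicate_mono[of m] xc
    by (intro conjI exI[of _ 0]) auto
  then show ?thesis by (rule degen_thin)
qed

lemma FF:
  assumes z: "z \<in> cells X (Suc M)" and g: "mono_op m (Suc M) g" and i: "i \<le> Suc M" "i \<notin> set g"
  shows "act X (Suc M) g z = act X M (reidx i g) (act X (Suc M) (face (Suc M) i) z)"
proof -
  have "act X M (reidx i g) (act X (Suc M) (face (Suc M) i) z) =
        act X (Suc M) (map (\<lambda>j. face (Suc M) i ! j) (reidx i g)) z"
    by (rule act_comp[OF z mono_op_face[OF i(1)] mono_op_reidx[OF g i]])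
  also have "map (\<lambda>j. face (Suc M) i ! j) (reidx i g) = g"
    using face_reidx[OF i(1) i(2)] g by (simp add: mono_op_def)
  finally show ?thesis by simp
qed

lemma FC:
  assumes z: "z \<in> cells X (Suc M)" and g: "mono_op m (Suc M) g" and i: "i \<le> Suc M" "i \<notin> set g"
    and c: "act X (Suc M) (face (Suc M) i) z = const X x M"
  shows "act X (Suc M) g z = const X x m"
  using FF[OF z g i] c const_act[OF mono_op_reidx[OF g i]] by simp

lemma DD:
  assumes z: "z \<in> cells X (Suc (Suc p))" and ij: "i < j" "j \<le> Suc (Suc p)"
  shows "act X (Suc p) (face (Suc p) i) (act X (Suc (Suc p)) (face (Suc (Suc p)) j) z) =
         act X (Suc p) (face (Suc p) (j - 1)) (act X (Suc (Suc p)) (face (Suc (Suc p)) i) z)"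
proof -
  have fi: "mono_op p (Suc p) (face (Suc p) i)" "mono_op p (Suc p) (face (Suc p) (j - 1))"
    using ij by (auto intro!: mono_op_face)
  show ?thesis
    using act_comp[OF z mono_op_face[OF ij(2)] fi(1)]
      act_comp[OF z mono_op_face[of i] fi(2)] ij face_face[OF ij] by simp
qed

end

lemma degen_not_distinct:
  assumes "degen (Dcells N) Dact m f" shows "\<not> distinct f"
proof
  assume d: "distinct f"
  from assms obtain k g z where k: "k < m" "mono_op m k g" "f = Dact k g z"
    unfolding degen_def by blast
  have "set g \<subseteq> {0..k}" using k(2) by (auto simp: mono_op_def)
  then have "card (set g) \<le> Suc k" using card_mono[of "{0..k}" "set g"] by simp
  moreover have "length g = Suc m" using k(2) by (simp add: mono_op_def)
  moreover have "distinct g" using d k(3) by (simp add: Dact_def distinct_map)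
  ultimately show False using k(1) distinct_card[of g] by simp
qed

lemma distinct_face_eq:
  assumes "mono_op M (Suc M) f" "distinct f" "i \<le> Suc M" "i \<notin> set f"
  shows "f = face (Suc M) i"
proof (rule sorted_distinct_set_unique)
  show "sorted f" "distinct f" using assms by (auto simp: mono_op_def)
  show "sorted (face (Suc M) i)" "distinct (face (Suc M) i)" by (auto simp: face_def sorted_append)
  have s: "set f \<subseteq> {0..Suc M} - {i}" using assms by (auto simp: mono_op_def)
  have "card (set f) = Suc M" using assms by (simp add: mono_op_def distinct_card)
  moreover have "card ({0..Suc M} - {i}) = Suc M" using assms by simp
  ultimately have "set f = {0..Suc M} - {i}" using s by (simp add: card_subset_eq)
  then show "set f = set (face (Suc M) i)" using set_face[OF assms(3)] by simp
qed

lemma distinct_id_eq: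
  assumes "mono_op N N f" "distinct f"
  shows "f = [0..<Suc N]"
proof (rule sorted_distinct_set_unique)
  show "sorted f" "distinct f" using assms by (auto simp: mono_op_def)
  show "sorted [0..<Suc N]" "distinct [0..<Suc N]" by (auto simp del: upt_Suc)
  have s: "set f \<subseteq> {0..N}" using assms by (auto simp: mono_op_def)
  have "card (set f) = Suc N" using assms by (simp add: mono_op_def distinct_card)
  then have "set f = {0..N}" using s card_subset_eq[of "{0..N}" "set f"] by simp
  then show "set f = set [0..<Suc N]" by (simp only: set_upt atLeastLessThanSuc_atLeastAtMost)
qed

lemma smap_cong:
  assumes G: "smap A X G" and eq: "\<And>m a. a \<in> cells A m \<Longrightarrow> G a = G' a" and th: "\<And>m. thin A m \<subseteq> cells A m"
    and ac: "\<And>m k g a. a \<in> cells A m \<Longrightarrow> mono_op k m g \<Longrightarrow> act A m g a \<in> cells A k"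
  shows "smap A X G'"
proof -
  have G1: "\<And>m a. a \<in> cells A m \<Longrightarrow> G a \<in> cells X m"
   and G2: "\<And>m k g a. a \<in> cells A m \<Longrightarrow> mono_op k m g \<Longrightarrow> G (act A m g a) = act X m g (G a)"
   and G3: "\<And>m a. a \<in> thin A m \<Longrightarrow> G a \<in> thin X m"
    using G unfolding smap_def by blast+
  show ?thesis unfolding smap_def
  proof (intro conjI allI impI)
    fix m a assume a: "a \<in> cells A m" then show "G' a \<in> cells X m"
      using G1[OF a] eq[OF a] by simp
  next
    fix m k g a assume a: "a \<in> cells A m" "mono_op k m g"
    show "G' (act A m g a) = act X m g (G' a)"
      using G2[OF a] eq[OF a(1)] eq[OF ac[OF a]] by simp
  next
    fix m a assume a: "a \<in> thin A m"
    then have "a \<in> cells A m" using th by blast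
    then show "G' a \<in> thin X m" using G3[OF a] eq by simp
  qed
qed

context WC begin

lemma TC:
  assumes y: "y \<in> cells X (Suc M)" "y \<in> thin X (Suc M)"
    and I: "I \<subseteq> {0..Suc M}" "card I \<ge> 2"
    and c: "\<And>i. i \<le> Suc M \<Longrightarrow> i \<notin> I \<Longrightarrow> act X (Suc M) (face (Suc M) i) y = const X x M"
    and g: "mono_op m (Suc M) g" "I \<subseteq> set g"
  shows "act X (Suc M) g y \<in> thin X m"
proof (cases "distinct g")
  case False then show ?thesis using DG[OF y(1) g(1)] by simp
next
  case True
  show ?thesis
  proof (cases "set g = {0..Suc M}")
    case True
    have "g = [0..<Suc (Suc M)]"
    proof (rule sorted_distinct_set_unique)
      show "sorted g" "distinct g" using g \<open>distinct g\<close> by (auto simp: mono_op_def)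
      show "sorted [0..<Suc (Suc M)]" "distinct [0..<Suc (Suc M)]" by (simp_all del: upt_Suc)
      show "set g = set [0..<Suc (Suc M)]" using True by (simp del: upt_Suc add: atLeastLessThanSuc_atLeastAtMost)
    qed
    moreover have "m = Suc M" using g(1) \<open>g = [0..<Suc (Suc M)]\<close> by (simp add: mono_op_def del: upt_Suc)
    ultimately show ?thesis using act_id[OF y(1)] y(2) by (simp del: upt_Suc)
  next
    case False
    have "set g \<subseteq> {0..Suc M}" using g by (auto simp: mono_op_def)
    then obtain i where i: "i \<le> Suc M" "i \<notin> set g" using False by (meson atLeastAtMost_iff subsetI subset_antisym zero_le)
    then have "i \<notin> I" using g by auto
    have "finite (set g)" by simp
    then have "card I \<le> card (set g)" using g(2) card_mono by blast
    also have "\<dots> \<le> length g" by (rule card_length)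
    finally have "1 \<le> m" using I g by (simp add: mono_op_def)
    then show ?thesis using FC[OF y(1) g(1) i c[OF i(1) \<open>i \<notin> I\<close>]] const_thin by simp
  qed
qed

lemma YS:
  assumes z: "z \<in> cells X N"
    and th: "\<And>m f. mono_op m N f \<Longrightarrow> distinct f \<Longrightarrow> T m f \<Longrightarrow> act X N f z \<in> thin X m"
  shows "smap (Delta_with N T) X (\<lambda>f. act X N f z)"
  unfolding smap_def Delta_with_def
proof (simp, intro conjI allI impI)
  fix m a assume "a \<in> Dcells N m"
  then show "act X N a z \<in> cells X m" using act_cells[OF z] by (simp add: Dcells_def)
next
  fix m k g a assume "a \<in> Dcells N m" "mono_op k m g"
  then show "act X N (Dact m g a) z = act X m g (act X N a z)"
    using act_comp[OF z] by (simp add: Dcells_def Dact_def)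
next
  fix m a assume a: "a \<in> Dcells N m \<and> (degen (Dcells N) Dact m a \<or> T m a)"
  then have am: "mono_op m N a" by (simp add: Dcells_def)
  show "act X N a z \<in> thin X m"
  proof (cases "distinct a")
    case True
    then have "\<not> degen (Dcells N) Dact m a" using degen_not_distinct by metis
    then have "T m a" using a by simp
    then show ?thesis using th[OF am True] by simp
  next
    case False then show ?thesis using DG[OF z am] by simp
  qed
qed

lemma YG:
  assumes G: "smap (Delta_with N T) X G" and f: "mono_op m N f"
  shows "G f = act X N f (G [0..<Suc N])"
proof -
  have "[0..<Suc N] \<in> cells (Delta_with N T) N" by (simp add: Delta_with_def Dcells_def mono_op_id del: upt_Suc)
  moreover have "act (Delta_with N T) N f [0..<Suc N] = f"
    using f by (simp add: Delta_with_def Dact_def map_nth_id mono_op_def del: upt_Suc)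
  ultimately show ?thesis using G f unfolding smap_def by (metis sset.select_convs(2) Delta_with_def)
qed

lemma YG_cells:
  assumes G: "smap (Delta_with N T) X G"
  shows "G [0..<Suc N] \<in> cells X N"
proof -
  have "[0..<Suc N] \<in> cells (Delta_with N T) N" by (simp add: Delta_with_def Dcells_def mono_op_id del: upt_Suc)
  then show ?thesis using G unfolding smap_def by blast
qed

end

lemma reidx_miss1:
  assumes "i < i'" "i \<notin> set f" "i' \<notin> set f"
  shows "i' - 1 \<notin> set (reidx i f)"
proof
  assume "i' - 1 \<in> set (reidx i f)"
  then obtain v where v: "v \<in> set f" "i' - 1 = (if v < i then v else v - 1)" by (auto simp: reidx_def)
  show False
  proof (cases "v < i")
    case True then show ?thesis using v assms by simp
  next
    case False
    then have "v = i'" using v assms by (cases "v = i") auto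
    then show ?thesis using v assms by simp
  qed
qed

lemma reidx_miss2:
  assumes "i < i'" "i \<notin> set f" "i' \<notin> set f"
  shows "i \<notin> set (reidx i' f)"
proof
  assume "i \<in> set (reidx i' f)"
  then obtain v where v: "v \<in> set f" "i = (if v < i' then v else v - 1)" by (auto simp: reidx_def)
  show False
  proof (cases "v < i'")
    case True then show ?thesis using v assms by simp
  next
    case False
    then have "v = i'" using v assms by (cases "v = i'") auto
    then show ?thesis using v assms by simp
  qed
qed

lemma reidx_reidx:
  assumes "i < i'" "i \<notin> set f" "i' \<notin> set f"
  shows "reidx (i' - 1) (reidx i f) = reidx i (reidx i' f)"
  using assms unfolding reidx_def by (auto simp: map_eq_conv)

lemma distinct_reidx: "distinct (reidx i f) \<Longrightarrow> distinct f"
  unfolding reidx_def using distinct_map by blast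

lemma Dk_cells: "cells (Dk k N) = Dcells N"
  by (simp add: Dk_def Delta_with_def)

lemma Dk_thin_set:
  assumes "1 \<le> k" "Suc k \<le> N"
  shows "{i. i \<le> N \<and> (Suc i = k \<or> i = k \<or> i = Suc k)} = {k - 1, k, Suc k}"
  using assms by auto

context WC begin

lemma HF_pair:
  assumes f: "mono_op m (Suc (Suc p)) f"
    and ii: "i < i'" "i' \<le> Suc (Suc p)" "i \<notin> set f" "i' \<notin> set f"
    and yc: "y i \<in> cells X (Suc p)" "y i' \<in> cells X (Suc p)"
    and compat: "act X (Suc p) (face (Suc p) i) (y i') = act X (Suc p) (face (Suc p) (i' - 1)) (y i)"
  shows "act X (Suc p) (reidx i f) (y i) = act X (Suc p) (reidx i' f) (y i')"
proof -
  have i1: "i' - 1 \<le> Suc p" "i \<le> Suc p" using ii by auto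
  have m1: "mono_op m (Suc p) (reidx i f)" "mono_op m (Suc p) (reidx i' f)"
    using mono_op_reidx[OF f] ii by auto
  have vals: "\<forall>v\<in>set (reidx i f). v \<le> Suc p" "\<forall>v\<in>set (reidx i' f). v \<le> Suc p"
    using m1 by (auto simp: mono_op_def)
  have e1: "map (\<lambda>j. face (Suc p) (i' - 1) ! j) (reidx (i' - 1) (reidx i f)) = reidx i f"
    by (rule face_reidx[OF i1(1) reidx_miss1[OF ii(1,3,4)] vals(1)])
  have e2: "map (\<lambda>j. face (Suc p) i ! j) (reidx i (reidx i' f)) = reidx i' f"
    by (rule face_reidx[OF i1(2) reidx_miss2[OF ii(1,3,4)] vals(2)])
  have m2: "mono_op m p (reidx i (reidx i' f))"
    using mono_op_reidx[OF m1(2) i1(2) reidx_miss2[OF ii(1,3,4)]] .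
  have rr: "reidx (i' - 1) (reidx i f) = reidx i (reidx i' f)" by (rule reidx_reidx[OF ii(1,3,4)])
  have "act X (Suc p) (reidx i f) (y i) =
        act X p (reidx i (reidx i' f)) (act X (Suc p) (face (Suc p) (i' - 1)) (y i))"
    using act_comp[OF yc(1) mono_op_face[OF i1(1)] m2] e1 rr by simp
  also have "\<dots> = act X p (reidx i (reidx i' f)) (act X (Suc p) (face (Suc p) i) (y i'))"
    using compat by simp
  also have "\<dots> = act X (Suc p) (reidx i' f) (y i')"
    using act_comp[OF yc(2) mono_op_face[OF i1(2)] m2] e2 by simp
  finally show ?thesis .
qed

lemma HF:
  assumes k: "1 \<le> k" "Suc k \<le> Suc (Suc p)"
    and yc: "\<And>i. i \<le> Suc (Suc p) \<Longrightarrow> i \<noteq> k \<Longrightarrow> y i \<in> cells X (Suc p)"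
    and compat: "\<And>i i'. i < i' \<Longrightarrow> i' \<le> Suc (Suc p) \<Longrightarrow> i \<noteq> k \<Longrightarrow> i' \<noteq> k \<Longrightarrow>
        act X (Suc p) (face (Suc p) i) (y i') = act X (Suc p) (face (Suc p) (i' - 1)) (y i)"
    and th: "\<And>i m g. i \<le> Suc (Suc p) \<Longrightarrow> i \<noteq> k \<Longrightarrow> mono_op m (Suc p) g \<Longrightarrow>
        {k - 1, k, Suc k} \<subseteq> set (map (\<lambda>j. face (Suc (Suc p)) i ! j) g) \<Longrightarrow> act X (Suc p) g (y i) \<in> thin X m"
  shows "\<exists>z \<in> cells X (Suc (Suc p)). (\<forall>i\<le>Suc (Suc p). i \<noteq> k \<longrightarrow> act X (Suc (Suc p)) (face (Suc (Suc p)) i) z = y i)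
           \<and> smap (Dk k (Suc (Suc p))) X (\<lambda>f. act X (Suc (Suc p)) f z)"
proof -
  define N where "N = Suc (Suc p)"
  define P where "P f i \<longleftrightarrow> i \<le> N \<and> i \<noteq> k \<and> i \<notin> set f" for f i
  define F where "F f = act X (Suc p) (reidx (LEAST i. P f i) f) (y (LEAST i. P f i))" for f
  have WD: "F f = act X (Suc p) (reidx i f) (y i)" if f: "mono_op m N f" and Pi: "P f i" for f m i
  proof -
    define i0 where "i0 = (LEAST i. P f i)"
    have P0: "P f i0" using Pi unfolding i0_def by (rule LeastI)
    have le: "i0 \<le> i" using Pi unfolding i0_def by (rule Least_le)
    show ?thesis
    proof (cases "i0 = i")
      case True then show ?thesis by (simp add: F_def i0_def[symmetric])
    next
      case False
      then have "i0 < i" using le by simp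
      then show ?thesis unfolding F_def i0_def[symmetric]
        using HF_pair[of m p f i0 i y] f P0 Pi yc compat unfolding P_def N_def by simp
    qed
  qed
  have Hsmap: "smap (Horn k N) X F"
    unfolding smap_def
  proof (intro conjI allI impI)
    fix m a assume a: "a \<in> cells (Horn k N) m"
    then have am: "mono_op m N a" and "\<exists>i\<le>N. i \<noteq> k \<and> i \<notin> set a"
      by (auto simp: Horn_def Hcells_def Dcells_def)
    then obtain i where Pi: "P a i" unfolding P_def by blast
    show "F a \<in> cells X m" using WD[OF am Pi] act_cells[OF yc mono_op_reidx] am Pi
      unfolding P_def N_def by auto
  next
    fix m k' g a assume a: "a \<in> cells (Horn k N) m" and g: "mono_op k' m g"
    then have am: "mono_op m N a" and "\<exists>i\<le>N. i \<noteq> k \<and> i \<notin> set a"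
      by (auto simp: Horn_def Hcells_def Dcells_def)
    then obtain i where Pi: "P a i" unfolding P_def by blast
    have ga: "mono_op k' N (map (\<lambda>j. a ! j) g)" by (rule mono_op_Dact[OF g am])
    have Pi2: "P (map (\<lambda>j. a ! j) g) i" using Pi g am unfolding P_def mono_op_def
      by (auto simp: less_Suc_eq_le)
    have ri: "mono_op m (Suc p) (reidx i a)" using mono_op_reidx[of m "Suc p" a i] am Pi unfolding P_def N_def by auto
    have "reidx i (map (\<lambda>j. a ! j) g) = map (\<lambda>j. reidx i a ! j) g"
      using reidx_Dact[of g a i] g am unfolding mono_op_def by (auto simp: less_Suc_eq_le)
    then have "F (map (\<lambda>j. a ! j) g) = act X m g (act X (Suc p) (reidx i a) (y i))"
      using WD[OF ga Pi2] act_comp[OF yc ri g] Pi unfolding P_def N_def by auto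
    also have "\<dots> = act X m g (F a)" using WD[OF am Pi] by simp
    finally show "F (act (Horn k N) m g a) = act X m g (F a)" by (simp add: Horn_def Dact_def)
  next
    fix m a assume a: "a \<in> thin (Horn k N) m"
    then have am: "mono_op m N a" and ex: "\<exists>i\<le>N. i \<noteq> k \<and> i \<notin> set a"
      and tk: "degen (Dcells N) Dact m a \<or> {i. i \<le> N \<and> (Suc i = k \<or> i = k \<or> i = Suc k)} \<subseteq> set a"
      by (auto simp: Horn_def Hcells_def Dcells_def Dk_def Delta_with_def)
    then obtain i where Pi: "P a i" unfolding P_def by blast
    have ri: "mono_op m (Suc p) (reidx i a)" using mono_op_reidx[of m "Suc p" a i] am Pi unfolding P_def N_def by auto
    have yi: "y i \<in> cells X (Suc p)" using yc Pi unfolding P_def N_def by auto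
    show "F a \<in> thin X m"
    proof (cases "distinct a")
      case False
      then have "\<not> distinct (reidx i a)" using distinct_reidx by blast
      then show ?thesis using WD[OF am Pi] DG[OF yi ri] by simp
    next
      case True
      then have "{k - 1, k, Suc k} \<subseteq> set a" using tk degen_not_distinct Dk_thin_set[OF k] unfolding N_def by metis
      moreover have "map (\<lambda>j. face (Suc (Suc p)) i ! j) (reidx i a) = a"
        using face_reidx[of i "Suc p" a] am Pi unfolding P_def N_def mono_op_def by auto
      ultimately have "{k - 1, k, Suc k} \<subseteq> set (map (\<lambda>j. face (Suc (Suc p)) i ! j) (reidx i a))" by simp
      moreover have "i \<le> Suc (Suc p)" "i \<noteq> k" using Pi unfolding P_def N_def by auto
      ultimately show ?thesis using WD[OF am Pi] th[OF _ _ ri] by simp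
    qed
  qed
  have "has_rlp (Horn k N) (Dk k N) X" using wc k unfolding weak_complicial_def N_def by auto
  then obtain G where G: "smap (Dk k N) X G" and GF: "\<And>m a. a \<in> cells (Horn k N) m \<Longrightarrow> G a = F a"
    using Hsmap unfolding has_rlp_def by blast
  define z where "z = G [0..<Suc N]"
  have zc: "z \<in> cells X N" using YG_cells G unfolding z_def Dk_def by blast
  have Gz: "G f = act X N f z" if "mono_op m N f" for m f
    using YG[of N _ G] G that unfolding z_def Dk_def by blast
  have sm: "smap (Dk k N) X (\<lambda>f. act X N f z)"
  proof (rule smap_cong[OF G])
    show "a \<in> cells (Dk k N) m \<Longrightarrow> G a = act X N a z" for m a using Gz by (simp add: Dk_cells Dcells_def)
    show "thin (Dk k N) m \<subseteq> cells (Dk k N) m" for m by (auto simp: Dk_def Delta_with_def)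
    show "a \<in> cells (Dk k N) m \<Longrightarrow> mono_op k' m g \<Longrightarrow> act (Dk k N) m g a \<in> cells (Dk k N) k'" for m k' g a
      by (simp add: Dk_def Delta_with_def Dcells_def Dact_def mono_op_Dact)
  qed
  have faces: "act X N (face N i) z = y i" if i: "i \<le> N" "i \<noteq> k" for i
  proof -
    have fm: "mono_op (Suc p) N (face N i)" using mono_op_face i unfolding N_def by simp
    have Pi: "P (face N i) i" using i unfolding P_def by (simp add: set_face)
    have "face N i \<in> cells (Horn k N) (Suc p)"
      using fm i by (auto simp: Horn_def Hcells_def Dcells_def set_face)
    then have "act X N (face N i) z = F (face N i)" using GF Gz[OF fm] by simp
    also have "\<dots> = act X (Suc p) (reidx i (face N i)) (y i)" by (rule WD[OF fm Pi])
    also have "\<dots> = y i" using reidx_face[of i "Suc p"] i act_id[OF yc[OF i[unfolded N_def]]] unfolding N_def by (simp del: upt_Suc)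
    finally show ?thesis .
  qed
  show ?thesis using zc faces sm unfolding N_def by blast
qed

end

context WC begin

lemma HF2:
  assumes z: "z \<in> cells X (Suc (Suc p))" and sm: "smap (Dk k (Suc (Suc p))) X (\<lambda>f. act X (Suc (Suc p)) f z)"
    and k: "k \<le> Suc (Suc p)"
    and th: "\<And>i. i \<le> Suc (Suc p) \<Longrightarrow> i \<noteq> k \<Longrightarrow> act X (Suc (Suc p)) (face (Suc (Suc p)) i) z \<in> thin X (Suc p)"
  shows "act X (Suc (Suc p)) (face (Suc (Suc p)) k) z \<in> thin X (Suc p)"
proof -
  define N where "N = Suc (Suc p)"
  define F where "F f = act X N f z" for f
  have smk: "\<And>m a. a \<in> thin (Dk k N) m \<Longrightarrow> F a \<in> thin X m"
    using sm unfolding smap_def F_def N_def by blast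
  have Fs: "smap (Dk' k N) X F"
    unfolding smap_def
  proof (intro conjI allI impI)
    fix m a assume "a \<in> cells (Dk' k N) m"
    then show "F a \<in> cells X m" using act_cells[OF z] unfolding F_def N_def by (simp add: Dk'_def Dcells_def)
  next
    fix m k' g a assume "a \<in> cells (Dk' k N) m" "mono_op k' m g"
    then show "F (act (Dk' k N) m g a) = act X m g (F a)"
      using act_comp[OF z] unfolding F_def N_def by (simp add: Dk'_def Dcells_def Dact_def)
  next
    fix m a assume a: "a \<in> thin (Dk' k N) m"
    show "F a \<in> thin X m"
    proof (cases "a \<in> thin (Dk k N) m")
      case True then show ?thesis by (rule smk)
    next
      case False
      then have m: "m = Suc p" and ah: "a \<in> Hcells k N m" using a unfolding N_def
        by (auto simp: Dk'_def split: if_splits)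
      then have am: "mono_op (Suc p) N a" and ex: "\<exists>i\<le>N. i \<noteq> k \<and> i \<notin> set a"
        by (auto simp: Hcells_def Dcells_def)
      then obtain i where i: "i \<le> N" "i \<noteq> k" "i \<notin> set a" by blast
      show ?thesis
      proof (cases "distinct a")
        case True
        then have "a = face N i" using distinct_face_eq[of "Suc p" a i] am i unfolding N_def by simp
        then show ?thesis using th i m unfolding F_def N_def by simp
      next
        case False
        then show ?thesis using DG[of z N "Suc p" a] z am m unfolding F_def N_def by simp
      qed
    qed
  qed
  have "has_rlp (Dk' k N) (Dk'' k N) X" using wc k unfolding weak_complicial_def N_def by auto
  then obtain G where G: "smap (Dk'' k N) X G" and GF: "\<And>m a. a \<in> cells (Dk' k N) m \<Longrightarrow> G a = F a"
    using Fs unfolding has_rlp_def by blast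
  have fk: "mono_op (Suc p) N (face N k)" using mono_op_face k unfolding N_def by simp
  have "face N k \<in> thin (Dk'' k N) (Suc p)" using fk by (simp add: Dk''_def Dcells_def N_def)
  then have "G (face N k) \<in> thin X (Suc p)" using G unfolding smap_def by blast
  moreover have "G (face N k) = F (face N k)" using GF fk by (simp add: Dk'_def Dcells_def)
  ultimately show ?thesis unfolding F_def N_def by simp
qed

end

definition sdeg :: "nat \<Rightarrow> nat \<Rightarrow> nat list" where
  "sdeg n j = [0..<Suc j] @ [j..<Suc n]"

lemma length_sdeg: "j \<le> n \<Longrightarrow> length (sdeg n j) = Suc (Suc n)"
  by (simp add: sdeg_def)

lemma nth_sdeg: "j \<le> n \<Longrightarrow> v < Suc (Suc n) \<Longrightarrow> sdeg n j ! v = (if v \<le> j then v else v - 1)"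
  by (auto simp: sdeg_def nth_append simp del: upt_Suc)

lemma mono_op_sdeg: "j \<le> n \<Longrightarrow> mono_op (Suc n) n (sdeg n j)"
  by (auto simp: mono_op_def sdeg_def sorted_append simp del: upt_Suc)

lemma sdeg_not_distinct: "j \<le> n \<Longrightarrow> \<not> distinct (sdeg n j)"
  by (auto simp: sdeg_def simp del: upt_Suc)

lemma sdeg_face_id:
  assumes "j \<le> n" "l = j \<or> l = Suc j"
  shows "map (\<lambda>t. sdeg n j ! t) (face (Suc n) l) = [0..<Suc n]"
  using assms by (intro nth_equalityI) (auto simp: length_face nth_face nth_sdeg nth_upt simp del: upt_Suc)

lemma sdeg_face_miss:
  assumes "j \<le> n" "l \<le> Suc n" "l \<noteq> j" "l \<noteq> Suc j"
  shows "set (map (\<lambda>t. sdeg n j ! t) (face (Suc n) l)) \<noteq> {0..n}"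
proof -
  define e where "e = (if l < j then l else l - 1)"
  have en: "e \<le> n" using assms unfolding e_def by auto
  have "e \<notin> set (map (\<lambda>t. sdeg n j ! t) (face (Suc n) l))"
  proof
    assume "e \<in> set (map (\<lambda>t. sdeg n j ! t) (face (Suc n) l))"
    then obtain t where t: "t < Suc n" "sdeg n j ! (face (Suc n) l ! t) = e"
      using assms by (auto simp: in_set_conv_nth length_face)
    define s where "s = face (Suc n) l ! t"
    have s1: "s = (if t < l then t else Suc t)" using t assms unfolding s_def by (simp add: nth_face)
    have s2: "s < Suc (Suc n)" using t s1 by simp
    have s3: "sdeg n j ! s = (if s \<le> j then s else s - 1)" by (rule nth_sdeg[OF assms(1) s2])
    have "(if s \<le> j then s else s - 1) = e" using t(2) s3 unfolding s_def by simp
    then show False using s1 assms t(1) unfolding e_def by (cases "t < l"; cases "l < j") (auto split: if_splits)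
  qed
  then show ?thesis using en by auto
qed

context WC begin

abbreviation S where "S \<equiv> sphere X n x"

definition sd :: "nat \<Rightarrow> 'a \<Rightarrow> 'a" where "sd j u = act X n (sdeg n j) u"

lemma sphere_cells: "u \<in> S \<Longrightarrow> u \<in> cells X n" by (simp add: sphere_def)

lemma sphere_const: "u \<in> S \<Longrightarrow> mono_op m n f \<Longrightarrow> set f \<noteq> {0..n} \<Longrightarrow> act X n f u = const X x m"
  by (simp add: sphere_def)

lemma nN: "n = Suc (n - 1)" using n1 by simp

lemma sphere_face: assumes u: "u \<in> S" and l: "l \<le> n" shows "act X n (face n l) u = const X x (n - 1)"
proof (rule sphere_const[OF u])
  show "mono_op (n - 1) n (face n l)" using mono_op_face[of l "n - 1"] nN l by simp
  have "l \<notin> set (face n l)" using set_face[OF l] by simp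
  then show "set (face n l) \<noteq> {0..n}" using l by auto
qed

lemma const_sphere: "const X x n \<in> S"
  unfolding sphere_def using const_cells const_act by simp

lemma const_face: "l \<le> Suc m \<Longrightarrow> act X (Suc m) (face (Suc m) l) (const X x (Suc m)) = const X x m"
  using const_act mono_op_face by blast

lemma sd_cells: "u \<in> S \<Longrightarrow> j \<le> n \<Longrightarrow> sd j u \<in> cells X (Suc n)"
  unfolding sd_def by (rule act_cells[OF sphere_cells mono_op_sdeg])

lemma sd_thin: "u \<in> S \<Longrightarrow> j \<le> n \<Longrightarrow> sd j u \<in> thin X (Suc n)"
  unfolding sd_def by (rule DG[OF sphere_cells mono_op_sdeg sdeg_not_distinct])

lemma sd_face:
  assumes u: "u \<in> S" and j: "j \<le> n" and l: "l \<le> Suc n"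
  shows "act X (Suc n) (face (Suc n) l) (sd j u) = (if l = j \<or> l = Suc j then u else const X x n)"
proof -
  have c: "act X (Suc n) (face (Suc n) l) (sd j u) = act X n (map (\<lambda>t. sdeg n j ! t) (face (Suc n) l)) u"
    unfolding sd_def using act_comp[OF sphere_cells[OF u] mono_op_sdeg[OF j] mono_op_face[OF l]] .
  have m: "mono_op n n (map (\<lambda>t. sdeg n j ! t) (face (Suc n) l))"
    using mono_op_Dact[OF mono_op_face[OF l] mono_op_sdeg[OF j]] .
  show ?thesis
  proof (cases "l = j \<or> l = Suc j")
    case True then show ?thesis using c sdeg_face_id[OF j True] act_id[OF sphere_cells[OF u]] by (simp del: upt_Suc)
  next
    case False
    then have "l \<noteq> j" "l \<noteq> Suc j" by auto
    then show ?thesis using c sphere_const[OF u m sdeg_face_miss[OF j l]] False by presburger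
  qed
qed

end

lemma card3: "1 \<le> k \<Longrightarrow> card {k - 1, k, Suc k} = 3"
  by (cases k) auto

context WC begin

lemma mono_face_n: "l \<le> n \<Longrightarrow> mono_op (n - 1) n (face n l)"
  using mono_op_face[of l "n - 1"] nN by simp

lemma const_face_n: "l \<le> n \<Longrightarrow> act X n (face n l) (const X x n) = const X x (n - 1)"
  using const_act[OF mono_face_n] by simp

lemma DDn:
  assumes t: "t \<in> cells X (Suc n)" and l: "l \<le> n" and i: "i \<le> Suc n"
  shows "act X n (face n l) (act X (Suc n) (face (Suc n) i) t) =
    (if l < i then act X n (face n (i - 1)) (act X (Suc n) (face (Suc n) l) t)
     else act X n (face n i) (act X (Suc n) (face (Suc n) (Suc l)) t))"
proof -
  obtain p where p: "n = Suc p" using n1 by (cases n) auto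
  show ?thesis
  proof (cases "l < i")
    case True
    then show ?thesis using DD[of t p l i] t i p by simp
  next
    case False
    then show ?thesis using DD[of t p i "Suc l"] t l p by simp
  qed
qed

lemma HF3:
  assumes k: "1 \<le> k" "k \<le> Suc n"
    and yc: "\<And>i. i \<le> Suc (Suc n) \<Longrightarrow> i \<noteq> k \<Longrightarrow> y i \<in> cells X (Suc n)"
    and yt: "\<And>i. i \<le> Suc (Suc n) \<Longrightarrow> i \<noteq> k \<Longrightarrow> y i \<in> thin X (Suc n)"
    and compat: "\<And>i i'. i < i' \<Longrightarrow> i' \<le> Suc (Suc n) \<Longrightarrow> i \<noteq> k \<Longrightarrow> i' \<noteq> k \<Longrightarrow>
        act X (Suc n) (face (Suc n) i) (y i') = act X (Suc n) (face (Suc n) (i' - 1)) (y i)"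
    and th: "\<And>i m g. i \<le> Suc (Suc n) \<Longrightarrow> i \<noteq> k \<Longrightarrow> mono_op m (Suc n) g \<Longrightarrow>
        {k - 1, k, Suc k} \<subseteq> set (map (\<lambda>j. face (Suc (Suc n)) i ! j) g) \<Longrightarrow> act X (Suc n) g (y i) \<in> thin X m"
  shows "\<exists>t. t \<in> cells X (Suc n) \<and> t \<in> thin X (Suc n) \<and>
     (\<forall>l\<le>Suc n. act X (Suc n) (face (Suc n) l) t =
        (if l < k then act X (Suc n) (face (Suc n) (k - 1)) (y l) else act X (Suc n) (face (Suc n) k) (y (Suc l))))"
proof -
  obtain z where z: "z \<in> cells X (Suc (Suc n))"
    and zf: "\<forall>i\<le>Suc (Suc n). i \<noteq> k \<longrightarrow> act X (Suc (Suc n)) (face (Suc (Suc n)) i) z = y i"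
    and sm: "smap (Dk k (Suc (Suc n))) X (\<lambda>f. act X (Suc (Suc n)) f z)"
    using HF[of k n y, OF k(1) _ yc compat th] k by auto
  define t where "t = act X (Suc (Suc n)) (face (Suc (Suc n)) k) z"
  have kk: "k \<le> Suc (Suc n)" using k by simp
  have tc: "t \<in> cells X (Suc n)" unfolding t_def by (rule act_cells[OF z mono_op_face[OF kk]])
  have tt: "t \<in> thin X (Suc n)" unfolding t_def
    by (rule HF2[OF z sm kk]) (use zf yt in simp)
  have tf: "act X (Suc n) (face (Suc n) l) t =
        (if l < k then act X (Suc n) (face (Suc n) (k - 1)) (y l) else act X (Suc n) (face (Suc n) k) (y (Suc l)))"
    if l: "l \<le> Suc n" for l
  proof (cases "l < k")
    case True
    then show ?thesis unfolding t_def using DD[of z n l k] z kk zf l by simp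
  next
    case False
    then show ?thesis unfolding t_def using DD[of z n k "Suc l"] z l zf by simp
  qed
  show ?thesis using tc tt tf by blast
qed

lemma TH_const:
  assumes "1 \<le> k" "mono_op m (Suc p) g" "{k - 1, k, Suc k} \<subseteq> set (map (\<lambda>j. face (Suc (Suc p)) i ! j) g)"
  shows "act X (Suc p) g (const X x (Suc p)) \<in> thin X m"
proof -
  have "{k, Suc k} \<subseteq> set g'" if "{k - 1, k, Suc k} \<subseteq> set g'" for g' :: "nat list" using that by simp
  have "card {k, Suc k} \<le> card (set (map (\<lambda>j. face (Suc (Suc p)) i ! j) g))"
    using assms(3) by (intro card_mono) auto
  also have "\<dots> \<le> length g" using card_length[of "map (\<lambda>j. face (Suc (Suc p)) i ! j) g"] by simp
  finally have "1 \<le> m" using assms(2) by (simp add: mono_op_def)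
  then show ?thesis using const_act[OF assms(2)] const_thin by simp
qed

lemma TH_vac:
  assumes "mono_op m (Suc p) g" "i \<le> Suc (Suc p)"
  shows "i \<notin> set (map (\<lambda>j. face (Suc (Suc p)) i ! j) g)"
proof
  assume "i \<in> set (map (\<lambda>j. face (Suc (Suc p)) i ! j) g)"
  then obtain v where v: "v \<in> set g" "face (Suc (Suc p)) i ! v = i" by auto
  have "v < Suc (Suc p)" using v assms by (auto simp: mono_op_def)
  then show False using v nth_face[OF assms(2)] by (simp split: if_splits)
qed

lemma TH_good:
  assumes k: "1 \<le> k" and i: "Suc k < i" "i \<le> Suc (Suc p)"
    and y: "y \<in> cells X (Suc p)" "y \<in> thin X (Suc p)"
    and c: "\<And>l. l \<le> Suc p \<Longrightarrow> l \<noteq> k - 1 \<Longrightarrow> l \<noteq> k \<Longrightarrow> l \<noteq> Suc k \<Longrightarrow> act X (Suc p) (face (Suc p) l) y = const X x p"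
    and g: "mono_op m (Suc p) g" "{k - 1, k, Suc k} \<subseteq> set (map (\<lambda>j. face (Suc (Suc p)) i ! j) g)"
  shows "act X (Suc p) g y \<in> thin X m"
proof -
  have gv: "\<And>v. v \<in> set g \<Longrightarrow> v < Suc (Suc p)" using g by (auto simp: mono_op_def)
  have inS: "e \<in> set g" if e: "e \<in> {k - 1, k, Suc k}" for e
  proof -
    have "e \<in> set (map (\<lambda>j. face (Suc (Suc p)) i ! j) g)" using e g by blast
    then obtain v where v: "v \<in> set g" "face (Suc (Suc p)) i ! v = e" by auto
    have "face (Suc (Suc p)) i ! v = (if v < i then v else Suc v)" using nth_face[OF i(2) gv[OF v(1)]] .
    moreover have "e < i" using e i by auto
    ultimately have "v = e" using v by (simp split: if_splits)
    then show ?thesis using v by simp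
  qed
  have I: "{k - 1, k, Suc k} \<subseteq> {0..Suc p}" using i by auto
  have cI: "card {k - 1, k, Suc k} \<ge> 2" using card3[OF k] by simp
  show ?thesis
    by (rule TC[OF y I cI _ g(1)]) (use c inS in auto)
qed

lemma sphere_I:
  assumes u: "u \<in> cells X n" and f: "\<And>l. l \<le> n \<Longrightarrow> act X n (face n l) u = const X x (n - 1)"
  shows "u \<in> S"
proof -
  obtain p where p: "n = Suc p" using n1 by (cases n) auto
  have "act X n g u = const X x m" if g: "mono_op m n g" "set g \<noteq> {0..n}" for m g
  proof -
    have "set g \<subseteq> {0..n}" using g by (auto simp: mono_op_def)
    then obtain l where l: "l \<le> n" "l \<notin> set g" using g(2) by (meson atLeastAtMost_iff subsetI subset_antisym zero_le)
    show ?thesis using FC[of u p m g l] u g l f[OF l(1)] p by simp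
  qed
  then show ?thesis using u unfolding sphere_def by blast
qed

lemma filler_D:
  assumes "filler X n x a b \<theta>"
  shows "\<theta> [0..<Suc (Suc n)] \<in> cells X (Suc n)" "\<theta> [0..<Suc (Suc n)] \<in> thin X (Suc n)"
    "\<And>m f. mono_op m (Suc n) f \<Longrightarrow> \<theta> f = act X (Suc n) f (\<theta> [0..<Suc (Suc n)])"
    "act X (Suc n) (face (Suc n) (n - 1)) (\<theta> [0..<Suc (Suc n)]) = a"
    "act X (Suc n) (face (Suc n) (Suc n)) (\<theta> [0..<Suc (Suc n)]) = b"
    "\<And>i. i \<le> Suc n \<Longrightarrow> i \<noteq> n - 1 \<Longrightarrow> i \<noteq> n \<Longrightarrow> i \<noteq> Suc n \<Longrightarrow>
        act X (Suc n) (face (Suc n) i) (\<theta> [0..<Suc (Suc n)]) = const X x n"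
    "\<theta> (face (Suc n) n) = act X (Suc n) (face (Suc n) n) (\<theta> [0..<Suc (Suc n)])"
proof -
  have sm: "smap (Dk n (Suc n)) X \<theta>" using assms by (simp add: filler_def)
  then show c: "\<theta> [0..<Suc (Suc n)] \<in> cells X (Suc n)" using YG_cells unfolding Dk_def by blast
  show ff: "\<And>m f. mono_op m (Suc n) f \<Longrightarrow> \<theta> f = act X (Suc n) f (\<theta> [0..<Suc (Suc n)])"
    using YG sm unfolding Dk_def by blast
  have "[0..<Suc (Suc n)] \<in> thin (Dk n (Suc n)) (Suc n)"
    by (auto simp: Dk_def Delta_with_def Dcells_def mono_op_id simp del: upt_Suc)
  then show "\<theta> [0..<Suc (Suc n)] \<in> thin X (Suc n)" using sm unfolding smap_def by blast
  have fm: "\<And>i. i \<le> Suc n \<Longrightarrow> mono_op n (Suc n) (face (Suc n) i)" using mono_op_face by blast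
  show "act X (Suc n) (face (Suc n) (n - 1)) (\<theta> [0..<Suc (Suc n)]) = a"
    using assms ff[OF fm, of "n - 1"] by (simp add: filler_def)
  show "act X (Suc n) (face (Suc n) (Suc n)) (\<theta> [0..<Suc (Suc n)]) = b"
    using assms ff[OF fm, of "Suc n"] by (simp add: filler_def)
  show "\<And>i. i \<le> Suc n \<Longrightarrow> i \<noteq> n - 1 \<Longrightarrow> i \<noteq> n \<Longrightarrow> i \<noteq> Suc n \<Longrightarrow>
        act X (Suc n) (face (Suc n) i) (\<theta> [0..<Suc (Suc n)]) = const X x n"
    using assms ff[OF fm] by (simp add: filler_def)
  show "\<theta> (face (Suc n) n) = act X (Suc n) (face (Suc n) n) (\<theta> [0..<Suc (Suc n)])"
    using ff[OF fm] by simp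
qed

lemma filler_I:
  assumes t: "t \<in> cells X (Suc n)" "t \<in> thin X (Suc n)"
    and fa: "act X (Suc n) (face (Suc n) (n - 1)) t = a"
    and fb: "act X (Suc n) (face (Suc n) (Suc n)) t = b"
    and fc: "\<And>i. i \<le> Suc n \<Longrightarrow> i \<noteq> n - 1 \<Longrightarrow> i \<noteq> n \<Longrightarrow> i \<noteq> Suc n \<Longrightarrow>
        act X (Suc n) (face (Suc n) i) t = const X x n"
  shows "filler X n x a b (\<lambda>f. act X (Suc n) f t)"
proof -
  have ts: "{i. i \<le> Suc n \<and> (Suc i = n \<or> i = n \<or> i = Suc n)} = {n - 1, n, Suc n}"
    using Dk_thin_set[of n "Suc n"] n1 by simp
  have "smap (Delta_with (Suc n) (\<lambda>m f. {i. i \<le> Suc n \<and> (Suc i = n \<or> i = n \<or> i = Suc n)} \<subseteq> set f)) X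
           (\<lambda>f. act X (Suc n) f t)"
  proof (rule YS[OF t(1)])
    fix m f assume f: "mono_op m (Suc n) f" "distinct f" "{i. i \<le> Suc n \<and> (Suc i = n \<or> i = n \<or> i = Suc n)} \<subseteq> set f"
    have I: "{n - 1, n, Suc n} \<subseteq> {0..Suc n}" by auto
    have cI: "card {n - 1, n, Suc n} \<ge> 2" using card3[OF n1] by simp
    show "act X (Suc n) f t \<in> thin X m"
      by (rule TC[OF t I cI _ f(1)]) (use fc f(3) ts in auto)
  qed
  then have "smap (Dk n (Suc n)) X (\<lambda>f. act X (Suc n) f t)" by (simp add: Dk_def)
  then show ?thesis unfolding filler_def using fa fb fc by simp
qed

lemma filler_comp_S:
  assumes "filler X n x a b \<theta>" "a \<in> S" "b \<in> S"
  shows "\<theta> (face (Suc n) n) \<in> S"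
proof -
  note D = filler_D[OF assms(1)]
  define z where "z = \<theta> [0..<Suc (Suc n)]"
  have zc: "z \<in> cells X (Suc n)" using D(1) z_def by simp
  have "act X n (face n l) (act X (Suc n) (face (Suc n) n) z) = const X x (n - 1)" if l: "l \<le> n" for l
  proof (cases "l < n")
    case True
    then have "act X n (face n l) (act X (Suc n) (face (Suc n) n) z) = act X n (face n (n - 1)) (act X (Suc n) (face (Suc n) l) z)"
      using DDn[OF zc l, of n] by simp
    also have "\<dots> = const X x (n - 1)"
    proof (cases "l = n - 1")
      case True then show ?thesis using D(4) sphere_face[OF assms(2)] unfolding z_def by simp
    next
      case False
      then have "act X (Suc n) (face (Suc n) l) z = const X x n" using D(6)[of l] \<open>l < n\<close> unfolding z_def by simp
      then show ?thesis using const_face_n[of "n - 1"] by simp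
    qed
    finally show ?thesis .
  next
    case False
    then have "l = n" using l by simp
    then have "act X n (face n l) (act X (Suc n) (face (Suc n) n) z) = act X n (face n n) (act X (Suc n) (face (Suc n) (Suc n)) z)"
      using DDn[OF zc l, of n] by simp
    also have "\<dots> = const X x (n - 1)" using D(5) sphere_face[OF assms(3)] unfolding z_def by simp
    finally show ?thesis .
  qed
  moreover have "act X (Suc n) (face (Suc n) n) z \<in> cells X n" using act_cells[OF zc mono_op_face] by simp
  ultimately show ?thesis using sphere_I D(7) unfolding z_def by simp
qed

end

context WC begin

abbreviation C where "C \<equiv> const X x n"

definition good :: "'a \<Rightarrow> bool" where
  "good Y \<longleftrightarrow> Y \<in> cells X (Suc n) \<and> Y \<in> thin X (Suc n) \<and>
     (\<forall>l\<le>Suc n. l \<noteq> n - 1 \<and> l \<noteq> n \<and> l \<noteq> Suc n \<longrightarrow> act X (Suc n) (face (Suc n) l) Y = C)"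

abbreviation dd where "dd l Y \<equiv> act X (Suc n) (face (Suc n) l) Y"

lemma HFn:
  assumes gd: "good Y1" "good Y2" "good Y3"
    and c1: "dd (n - 1) Y2 = dd n Y1" and c2: "dd (n - 1) Y3 = dd (Suc n) Y1" and c3: "dd (Suc n) Y3 = dd (Suc n) Y2"
  shows "\<exists>t. good t \<and> dd (n - 1) t = dd (n - 1) Y1 \<and> dd n t = dd n Y2 \<and> dd (Suc n) t = dd n Y3"
proof -
  define y where "y i = (if i = n - 1 then Y1 else if i = Suc n then Y2 else if i = Suc (Suc n) then Y3 else const X x (Suc n))" for i
  have gY: "good (y i) \<or> y i = const X x (Suc n)" for i unfolding y_def using gd by auto
  have Cc: "const X x (Suc n) \<in> cells X (Suc n)" "const X x (Suc n) \<in> thin X (Suc n)" using const_cells const_thin by auto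
  have yc: "y i \<in> cells X (Suc n)" for i using gY[of i] Cc unfolding good_def by auto
  have yt: "y i \<in> thin X (Suc n)" for i using gY[of i] Cc unfolding good_def by auto
  have Cf: "dd l (const X x (Suc n)) = C" if "l \<le> Suc n" for l using const_face that by blast
  have yC: "dd l (y i) = C" if "l \<le> Suc n" "l < n - 1" for i l
    using gY[of i] Cf that unfolding good_def by force
  have compat: "dd i (y i') = dd (i' - 1) (y i)"
    if ii: "i < i'" "i' \<le> Suc (Suc n)" "i \<noteq> n" "i' \<noteq> n" for i i'
  proof (cases "i < n - 1")
    case True
    have l: "dd i (y i') = C" using yC[of i i'] True ii by simp
    have "i' - 1 \<le> Suc n" using ii by simp
    moreover have "y i = const X x (Suc n)" using True unfolding y_def by auto
    ultimately show ?thesis using l Cf by simp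
  next
    case False
    then have "i = n - 1 \<or> i = Suc n" using ii by auto
    moreover have "i' = Suc n \<or> i' = Suc (Suc n)" using ii False by auto
    ultimately show ?thesis using ii c1 c2 c3 nN unfolding y_def by auto
  qed
  have th: "act X (Suc n) g (y i) \<in> thin X m"
    if i: "i \<le> Suc (Suc n)" "i \<noteq> n" and g: "mono_op m (Suc n) g"
      and s: "{n - 1, n, Suc n} \<subseteq> set (map (\<lambda>j. face (Suc (Suc n)) i ! j) g)" for i m g
  proof -
    have "i \<notin> set (map (\<lambda>j. face (Suc (Suc n)) i ! j) g)" using TH_vac[OF g i(1)] .
    then have i2: "i \<noteq> n - 1" "i \<noteq> Suc n" using s by auto
    show ?thesis
    proof (cases "i = Suc (Suc n)")
      case True
      then have "y i = Y3" unfolding y_def using i2 by auto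
      have k2: "Suc n < i" "i \<le> Suc (Suc n)" using True by auto
      have "\<And>l. l \<le> Suc n \<Longrightarrow> l \<noteq> n - 1 \<Longrightarrow> l \<noteq> n \<Longrightarrow> l \<noteq> Suc n \<Longrightarrow> dd l (y i) = C"
        using gd(3) \<open>y i = Y3\<close> unfolding good_def by auto
      then show ?thesis using TH_good[OF n1 k2, of "y i" m g] g s yc yt by blast
    next
      case False
      then have "y i = const X x (Suc n)" unfolding y_def using i2 by auto
      then show ?thesis using TH_const[OF n1 g s] by simp
    qed
  qed
  obtain t where t: "t \<in> cells X (Suc n)" "t \<in> thin X (Suc n)"
    and tf: "\<forall>l\<le>Suc n. dd l t = (if l < n then dd (n - 1) (y l) else dd n (y (Suc l)))"
    using HF3[of n y, OF n1 _ yc yt compat th] by auto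
  have "dd l t = C" if "l \<le> Suc n" "l \<noteq> n - 1" "l \<noteq> n" "l \<noteq> Suc n" for l
  proof -
    have "l < n - 1" using that by auto
    then have "y l = const X x (Suc n)" unfolding y_def by auto
    then show ?thesis using tf that Cf[of "n - 1"] by auto
  qed
  moreover have "dd (n - 1) t = dd (n - 1) Y1" using tf n1 unfolding y_def by auto
  moreover have "dd n t = dd n Y2" using tf unfolding y_def by auto
  moreover have "dd (Suc n) t = dd n Y3" using tf unfolding y_def by auto
  ultimately show ?thesis using t unfolding good_def by blast
qed

end

context WC begin

definition Rj :: "nat \<Rightarrow> 'a \<Rightarrow> 'a \<Rightarrow> 'a \<Rightarrow> bool" where
  "Rj j w u v \<longleftrightarrow> w \<in> cells X (Suc n) \<and> w \<in> thin X (Suc n) \<and> dd j w = u \<and> dd (Suc j) w = v \<and>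
     (\<forall>i\<le>Suc n. i \<noteq> j \<and> i \<noteq> Suc j \<longrightarrow> dd i w = C)"

lemma good_filler: "filler X n x a b \<theta> \<Longrightarrow> good (\<theta> [0..<Suc (Suc n)])"
  using filler_D[of a b \<theta>] unfolding good_def by blast

lemma good_Rjn: "Rj n w u v \<Longrightarrow> good w"
  unfolding Rj_def good_def by auto

lemma good_sd: "a \<in> S \<Longrightarrow> good (sd (n - 1) a)"
  unfolding good_def using sd_cells[of a "n - 1"] sd_thin[of a "n - 1"] sd_face[of a "n - 1"] nN by auto

lemma filler_exists:
  assumes a: "a \<in> S" and b: "b \<in> S"
  shows "\<exists>\<theta>. filler X n x a b \<theta>"
proof -
  obtain p where p: "n = Suc p" using n1 by (cases n) auto
  define y where "y i = (if i = p then a else if i = Suc (Suc p) then b else const X x (Suc p))" for i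
  have yc: "y i \<in> cells X (Suc p)" for i
    unfolding y_def using sphere_cells[OF a] sphere_cells[OF b] const_cells p by auto
  have yf: "act X (Suc p) (face (Suc p) l) (y i) = const X x p" if "l \<le> Suc p" for i l
    unfolding y_def using sphere_face[OF a, of l] sphere_face[OF b, of l] const_face[of l p] that p by auto
  have compat: "act X (Suc p) (face (Suc p) i) (y i') = act X (Suc p) (face (Suc p) (i' - 1)) (y i)"
    if "i < i'" "i' \<le> Suc (Suc p)" for i i'
    using yf[of i i'] yf[of "i' - 1" i] that by simp
  have th: "act X (Suc p) g (y i) \<in> thin X m"
    if i: "i \<le> Suc (Suc p)" "i \<noteq> Suc p" and g: "mono_op m (Suc p) g"
      and s: "{Suc p - 1, Suc p, Suc (Suc p)} \<subseteq> set (map (\<lambda>j. face (Suc (Suc p)) i ! j) g)" for i m g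
  proof -
    have "i \<notin> set (map (\<lambda>j. face (Suc (Suc p)) i ! j) g)" using TH_vac[OF g i(1)] .
    then have "i \<noteq> p" "i \<noteq> Suc (Suc p)" using s by auto
    then have "y i = const X x (Suc p)" unfolding y_def by simp
    then show ?thesis using TH_const[of "Suc p" m p g i] g s by simp
  qed
  obtain z where z: "z \<in> cells X (Suc (Suc p))"
    and zf: "\<forall>i\<le>Suc (Suc p). i \<noteq> Suc p \<longrightarrow> act X (Suc (Suc p)) (face (Suc (Suc p)) i) z = y i"
    and sm: "smap (Dk (Suc p) (Suc (Suc p))) X (\<lambda>f. act X (Suc (Suc p)) f z)"
    using HF[of "Suc p" p y, OF _ _ yc compat th] by auto
  have "filler X n x a b (\<lambda>f. act X (Suc n) f z)"
    unfolding filler_def using sm zf p unfolding y_def by auto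
  then show ?thesis by blast
qed

lemma Rj_refl: "a \<in> S \<Longrightarrow> Rj n (sd n a) a a"
  unfolding Rj_def using sd_cells[of a n] sd_thin[of a n] sd_face[of a n] by auto

lemma unit_left: assumes b: "b \<in> S" shows "filler X n x C b (\<lambda>f. act X (Suc n) f (sd n b)) \<and>
    act X (Suc n) (face (Suc n) n) (sd n b) = b"
proof
  have "n - 1 \<noteq> n" "n - 1 \<noteq> Suc n" "n - 1 \<le> Suc n" using n1 by auto
  then have e: "dd (n - 1) (sd n b) = C" using sd_face[OF b, of n "n - 1"] by simp
  show "filler X n x C b (\<lambda>f. act X (Suc n) f (sd n b))"
    by (rule filler_I[OF sd_cells[OF b] sd_thin[OF b]]) (use e sd_face[OF b, of n] in auto)
  show "act X (Suc n) (face (Suc n) n) (sd n b) = b" using sd_face[OF b, of n n] by simp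
qed

lemma unit_right: "a \<in> S \<Longrightarrow> filler X n x a C (\<lambda>f. act X (Suc n) f (sd (n - 1) a)) \<and>
    act X (Suc n) (face (Suc n) n) (sd (n - 1) a) = a"
  using filler_I[OF sd_cells[of a "n - 1"] sd_thin[of a "n - 1"]] sd_face[of a "n - 1"] nN by auto

lemma appW:
  assumes w: "Rj n w a a'" and t1: "filler X n x a b \<theta>" and t2: "filler X n x a' b \<theta>'"
  shows "\<exists>w'. Rj n w' (\<theta> (face (Suc n) n)) (\<theta>' (face (Suc n) n))"
proof -
  note D1 = filler_D[OF t1] and D2 = filler_D[OF t2]
  obtain t where t: "good t" "dd (n - 1) t = dd (n - 1) w" "dd n t = dd n (\<theta> [0..<Suc (Suc n)])"
    "dd (Suc n) t = dd n (\<theta>' [0..<Suc (Suc n)])"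
  proof (rule HFn[OF good_Rjn[OF w] good_filler[OF t1] good_filler[OF t2], THEN exE], goal_cases)
    case 1 show ?case using D1(4) w unfolding Rj_def by simp
  next
    case 2 show ?case using D2(4) w unfolding Rj_def by simp
  next
    case 3 show ?case using D1(5) D2(5) by simp
  next
    case (4 t) then show ?case using that by blast
  qed
  have "n - 1 \<noteq> n" "n - 1 \<noteq> Suc n" "n - 1 \<le> Suc n" using n1 by auto
  then have "dd (n - 1) w = C" using w unfolding Rj_def by blast
  then have "Rj n t (\<theta> (face (Suc n) n)) (\<theta>' (face (Suc n) n))"
    using t D1(7) D2(7) \<open>dd (n - 1) w = C\<close> unfolding Rj_def good_def by auto
  then show ?thesis by blast
qed

lemma appB:
  assumes a: "a \<in> S" and w: "Rj n w b b'" and t2: "filler X n x a b' \<theta>'"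
  shows "\<exists>\<theta>. filler X n x a b \<theta> \<and> \<theta> (face (Suc n) n) = \<theta>' (face (Suc n) n)"
proof -
  note D2 = filler_D[OF t2]
  have sf: "l \<le> Suc n \<Longrightarrow> dd l (sd (n - 1) a) = (if l = n - 1 \<or> l = n then a else C)" for l
    using sd_face[OF a, of "n - 1" l] nN by auto
  obtain t where t: "good t" "dd (n - 1) t = dd (n - 1) (sd (n - 1) a)" "dd n t = dd n (\<theta>' [0..<Suc (Suc n)])"
    "dd (Suc n) t = dd n w"
  proof (rule HFn[OF good_sd[OF a] good_filler[OF t2] good_Rjn[OF w], THEN exE], goal_cases)
    case 1 show ?case using D2(4) sf[of n] by simp
  next
    case 2
    have "n - 1 \<noteq> n" "n - 1 \<noteq> Suc n" "n - 1 \<le> Suc n" using n1 by auto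
    then have "dd (n - 1) w = C" using w unfolding Rj_def by blast
    moreover have "Suc n \<noteq> n - 1" "Suc n \<noteq> n" by auto
    ultimately show ?case using sf[of "Suc n"] by simp
  next
    case 3 show ?case using D2(5) w unfolding Rj_def by simp
  next
    case (4 t) then show ?case using that by blast
  qed
  have "filler X n x a b (\<lambda>f. act X (Suc n) f t)"
  proof (rule filler_I)
    show "t \<in> cells X (Suc n)" "t \<in> thin X (Suc n)" using t(1) unfolding good_def by auto
    show "dd (n - 1) t = a" using t(2) sf[of "n - 1"] by simp
    show "dd (Suc n) t = b" using t(4) w unfolding Rj_def by simp
    show "dd i t = C" if "i \<le> Suc n" "i \<noteq> n - 1" "i \<noteq> n" "i \<noteq> Suc n" for i
      using t(1) that unfolding good_def by blast
  qed
  moreover have "(\<lambda>f. act X (Suc n) f t) (face (Suc n) n) = \<theta>' (face (Suc n) n)" using t D2(7) by simp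
  ultimately show ?thesis by blast
qed

lemma appA:
  assumes t1: "filler X n x a b \<theta>1" and t2: "filler X n x (\<theta>1 (face (Suc n) n)) c \<theta>2"
    and t3: "filler X n x b c \<theta>3"
  shows "\<exists>\<theta>. filler X n x a (\<theta>3 (face (Suc n) n)) \<theta> \<and> \<theta> (face (Suc n) n) = \<theta>2 (face (Suc n) n)"
proof -
  note D1 = filler_D[OF t1] and D2 = filler_D[OF t2] and D3 = filler_D[OF t3]
  obtain t where t: "good t" "dd (n - 1) t = dd (n - 1) (\<theta>1 [0..<Suc (Suc n)])" "dd n t = dd n (\<theta>2 [0..<Suc (Suc n)])"
    "dd (Suc n) t = dd n (\<theta>3 [0..<Suc (Suc n)])"
  proof (rule HFn[OF good_filler[OF t1] good_filler[OF t2] good_filler[OF t3], THEN exE], goal_cases)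
    case 1 show ?case using D1(7) D2(4) by simp
  next
    case 2 show ?case using D1(5) D3(4) by simp
  next
    case 3 show ?case using D2(5) D3(5) by simp
  next
    case (4 t) then show ?case using that by blast
  qed
  have "filler X n x a (\<theta>3 (face (Suc n) n)) (\<lambda>f. act X (Suc n) f t)"
  proof (rule filler_I)
    show "t \<in> cells X (Suc n)" "t \<in> thin X (Suc n)" using t(1) unfolding good_def by auto
    show "dd (n - 1) t = a" using t(2) D1(4) by simp
    show "dd (Suc n) t = \<theta>3 (face (Suc n) n)" using t(4) D3(7) by simp
    show "dd i t = C" if "i \<le> Suc n" "i \<noteq> n - 1" "i \<noteq> n" "i \<noteq> Suc n" for i
      using t(1) that unfolding good_def by blast
  qed
  moreover have "(\<lambda>f. act X (Suc n) f t) (face (Suc n) n) = \<theta>2 (face (Suc n) n)" using t D2(7) by simp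
  ultimately show ?thesis by blast
qed

end

context WC begin

lemma Rstep:
  assumes j: "j < n" and u: "u \<in> S" and w: "Rj j w u v"
  shows "\<exists>w'. Rj (Suc j) w' u v"
proof -
  define k where "k = Suc j"
  define y where "y i = (if i = j then sd (Suc j) u else if i = Suc (Suc j) then sd j u
     else if i = Suc (Suc (Suc j)) then w else const X x (Suc n))" for i
  define fy where "fy i l = (if i = j then (if l = Suc j \<or> l = Suc (Suc j) then u else C)
     else if i = Suc (Suc j) then (if l = j \<or> l = Suc j then u else C)
     else if i = Suc (Suc (Suc j)) then (if l = j then u else if l = Suc j then v else C)
     else C)" for i l
  have wc: "w \<in> cells X (Suc n)" "w \<in> thin X (Suc n)" using w unfolding Rj_def by auto
  have wf: "dd l w = (if l = j then u else if l = Suc j then v else C)" if "l \<le> Suc n" for l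
    using w that unfolding Rj_def by auto
  have yf: "dd l (y i) = fy i l" if "l \<le> Suc n" for i l
  proof -
    consider "i = j" | "i = Suc (Suc j)" | "i = Suc (Suc (Suc j))" | "i \<noteq> j" "i \<noteq> Suc (Suc j)" "i \<noteq> Suc (Suc (Suc j))"
      by blast
    then show ?thesis
    proof cases
      case 1 then show ?thesis unfolding y_def fy_def using sd_face[OF u, of "Suc j" l] j that by simp
    next
      case 2 then show ?thesis unfolding y_def fy_def using sd_face[OF u, of j l] j that by simp
    next
      case 3 then show ?thesis unfolding y_def fy_def using wf[OF that] by simp
    next
      case 4 then show ?thesis unfolding y_def fy_def using const_face[OF that] by simp
    qed
  qed
  have yc: "y i \<in> cells X (Suc n)" for i
    unfolding y_def using sd_cells[OF u] wc const_cells j by simp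
  have yt: "y i \<in> thin X (Suc n)" for i
    unfolding y_def using sd_thin[OF u] wc const_thin j by simp
  have compat: "dd i (y i') = dd (i' - 1) (y i)"
    if ii: "i < i'" "i' \<le> Suc (Suc n)" "i \<noteq> k" "i' \<noteq> k" for i i'
  proof -
    have "i \<le> Suc n" "i' - 1 \<le> Suc n" using ii by auto
    then have "dd i (y i') = fy i' i" "dd (i' - 1) (y i) = fy i (i' - 1)" using yf by auto
    moreover have "fy i' i = fy i (i' - 1)" using ii unfolding fy_def k_def by auto
    ultimately show ?thesis by simp
  qed
  have k1: "1 \<le> k" "k \<le> Suc n" using j unfolding k_def by auto
  have th: "act X (Suc n) g (y i) \<in> thin X m"
    if i: "i \<le> Suc (Suc n)" "i \<noteq> k" and g: "mono_op m (Suc n) g"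
      and s: "{k - 1, k, Suc k} \<subseteq> set (map (\<lambda>j. face (Suc (Suc n)) i ! j) g)" for i m g
  proof -
    have "i \<notin> set (map (\<lambda>j. face (Suc (Suc n)) i ! j) g)" using TH_vac[OF g i(1)] .
    then have i2: "i \<noteq> j" "i \<noteq> Suc (Suc j)" using s unfolding k_def by auto
    show ?thesis
    proof (cases "i = Suc (Suc (Suc j))")
      case True
      then have "y i = w" unfolding y_def by simp
      moreover have k2: "Suc k < i" "i \<le> Suc (Suc n)" using True i unfolding k_def by auto
      moreover have "\<And>l. l \<le> Suc n \<Longrightarrow> l \<noteq> k - 1 \<Longrightarrow> l \<noteq> k \<Longrightarrow> l \<noteq> Suc k \<Longrightarrow> dd l w = C"
        using wf unfolding k_def by auto
      ultimately show ?thesis using TH_good[OF k1(1) k2, of w m g] g s wc by blast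
    next
      case False
      then have "y i = const X x (Suc n)" unfolding y_def using i2 by simp
      then show ?thesis using TH_const[OF k1(1) g s] by simp
    qed
  qed
  obtain t where t: "t \<in> cells X (Suc n)" "t \<in> thin X (Suc n)"
    and tf: "\<forall>l\<le>Suc n. dd l t = (if l < k then dd (k - 1) (y l) else dd k (y (Suc l)))"
    using HF3[of k y, OF k1 yc yt compat th] by blast
  have lo: "dd l t = fy l j" if "l \<le> Suc n" "l < Suc j" for l
    using tf that yf[of "k - 1" l] k1 unfolding k_def by simp
  have hi: "dd l t = fy (Suc l) (Suc j)" if "l \<le> Suc n" "\<not> l < Suc j" for l
    using tf that yf[of k "Suc l"] k1 unfolding k_def by simp
  have a1: "dd (Suc j) t = u" using hi[of "Suc j"] j unfolding fy_def by simp
  have a2: "dd (Suc (Suc j)) t = v" using hi[of "Suc (Suc j)"] j unfolding fy_def by simp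
  have a3: "dd i t = C" if "i \<le> Suc n" "i \<noteq> Suc j" "i \<noteq> Suc (Suc j)" for i
  proof (cases "i < Suc j")
    case True then show ?thesis using lo[OF that(1) True] unfolding fy_def by auto
  next
    case False then show ?thesis using hi[OF that(1) False] that unfolding fy_def by auto
  qed
  have "Rj (Suc j) t u v" using t a1 a2 a3 unfolding Rj_def by blast
  then show ?thesis by blast
qed

lemma Rj_to_n:
  assumes "j \<le> n" "u \<in> S" "Rj j w u v"
  shows "\<exists>w'. Rj n w' u v"
  using assms
proof (induction "n - j" arbitrary: j w)
  case 0 then have "j = n" by simp
  then show ?case using 0 by blast
next
  case (Suc d)
  then have "j < n" by simp
  then obtain w' where "Rj (Suc j) w' u v" using Rstep Suc.prems by blast
  then show ?case using Suc.hyps(1)[of "Suc j" w'] Suc.hyps(2) Suc.prems \<open>j < n\<close> by simp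
qed

end

definition pl :: "nat list \<Rightarrow> nat list \<Rightarrow> nat list" where
  "pl f e = map (\<lambda>t. f ! t + e ! t) [0..<length f]"

definition Cnd :: "nat \<Rightarrow> nat list \<Rightarrow> nat list \<Rightarrow> bool" where
  "Cnd n f e \<longleftrightarrow> (\<forall>t < length f. e ! t = 1 \<longrightarrow> f ! t = n)"

lemma length_pl[simp]: "length (pl f e) = length f" by (simp add: pl_def)
lemma nth_pl: "t < length f \<Longrightarrow> pl f e ! t = f ! t + e ! t" by (simp add: pl_def)

lemma e01: assumes "mono_op m 1 e" "t < length e" shows "e ! t = 0 \<or> e ! t = 1"
proof -
  have "e ! t \<in> set e" using assms(2) by (rule nth_mem)
  then have "e ! t \<le> 1" using assms(1) unfolding mono_op_def by blast
  then show ?thesis by arith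
qed

lemma mono_pl:
  assumes f: "mono_op m n f" and e: "mono_op m 1 e"
  shows "mono_op m (Suc n) (pl f e)"
proof -
  have fl: "length f = Suc m" "sorted f" "\<forall>i\<in>set f. i \<le> n" using f by (auto simp: mono_op_def)
  have el: "length e = Suc m" "sorted e" "\<forall>i\<in>set e. i \<le> 1" using e by (auto simp: mono_op_def)
  have "sorted (pl f e)" unfolding sorted_iff_nth_mono
  proof (intro allI impI)
    fix i j assume ij: "i \<le> j" "j < length (pl f e)"
    have "f ! i \<le> f ! j" using fl ij by (simp add: sorted_iff_nth_mono)
    moreover have "e ! i \<le> e ! j" using el fl ij by (simp add: sorted_iff_nth_mono)
    ultimately show "pl f e ! i \<le> pl f e ! j" using ij by (simp add: nth_pl)
  qed
  moreover have "\<forall>v\<in>set (pl f e). v \<le> Suc n"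
  proof
    fix v assume "v \<in> set (pl f e)"
    then obtain t where t: "t < length f" "v = f ! t + e ! t" by (auto simp: in_set_conv_nth nth_pl)
    have "f ! t \<in> set f" using t(1) by (rule nth_mem)
    then have "f ! t \<le> n" using fl by blast
    moreover have "e ! t \<in> set e" using t(1) fl el by simp
    then have "e ! t \<le> 1" using el by blast
    ultimately show "v \<le> Suc n" using t by simp
  qed
  ultimately show ?thesis using fl by (simp add: mono_op_def)
qed

lemma pl_Dact:
  assumes "\<forall>j\<in>set g. j < length f" "length e = length f"
  shows "pl (map (\<lambda>j. f ! j) g) (map (\<lambda>j. e ! j) g) = map (\<lambda>j. pl f e ! j) g"
  using assms by (intro nth_equalityI) (auto simp: nth_pl)

lemma Cnd_Dact:
  assumes "Cnd n f e" "\<forall>j\<in>set g. j < length f"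
  shows "Cnd n (map (\<lambda>j. f ! j) g) (map (\<lambda>j. e ! j) g)"
  using assms unfolding Cnd_def by auto

lemma noCnd_miss:
  assumes f: "mono_op m n f" and e: "mono_op m 1 e" and nc: "\<not> Cnd n f e"
    and g: "\<forall>j\<in>set g. j < length f"
    and c: "Cnd n (map (\<lambda>j. f ! j) g) (map (\<lambda>j. e ! j) g)"
  shows "n \<notin> set (pl (map (\<lambda>j. f ! j) g) (map (\<lambda>j. e ! j) g))"
proof
  have fl: "length f = Suc m" "sorted f" "\<forall>i\<in>set f. i \<le> n" using f by (auto simp: mono_op_def)
  have el: "length e = Suc m" "sorted e" using e by (auto simp: mono_op_def)
  obtain t0 where t0: "t0 < length f" "e ! t0 = 1" "f ! t0 \<noteq> n" using nc unfolding Cnd_def by blast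
  have "f ! t0 \<in> set f" using t0(1) by (rule nth_mem)
  then have "f ! t0 \<le> n" using fl by blast
  then have ft0: "f ! t0 < n" using t0(3) by simp
  assume "n \<in> set (pl (map (\<lambda>j. f ! j) g) (map (\<lambda>j. e ! j) g))"
  then obtain t where t: "t < length g" "f ! (g ! t) + e ! (g ! t) = n"
    by (auto simp: in_set_conv_nth nth_pl)
  define s where "s = g ! t"
  have s: "s < length f" using g t s_def by simp
  have "e ! s = 0 \<or> e ! s = 1" using e01[OF e] s fl el by simp
  then show False
  proof
    assume es: "e ! s = 0"
    have "s < t0"
    proof (rule ccontr)
      assume "\<not> s < t0"
      then have "e ! t0 \<le> e ! s" using el fl s by (simp add: sorted_iff_nth_mono)
      then show False using es t0 by simp
    qed
    then have "f ! s \<le> f ! t0" using fl t0 by (simp add: sorted_iff_nth_mono)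
    then show False using t es ft0 s_def by simp
  next
    assume es: "e ! s = 1"
    have "f ! s = n" using c t es unfolding Cnd_def s_def by auto
    then show False using t es s_def by simp
  qed
qed

lemma reidx_pl:
  assumes f: "mono_op m n f" and e: "mono_op m 1 e" and c: "Cnd n f e" and nn: "n \<notin> set (pl f e)"
  shows "reidx n (pl f e) = f"
proof (rule nth_equalityI)
  have fl: "length f = Suc m" "\<forall>i\<in>set f. i \<le> n" using f by (auto simp: mono_op_def)
  have el: "length e = Suc m" using e by (auto simp: mono_op_def)
  show "length (reidx n (pl f e)) = length f" by (simp add: reidx_def)
  fix t assume "t < length (reidx n (pl f e))"
  then have t: "t < length f" by (simp add: reidx_def)
  have ne: "pl f e ! t \<noteq> n" using nn t by (metis length_pl nth_mem)
  have "e ! t = 0 \<or> e ! t = 1" using e01[OF e] t fl el by simp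
  moreover have "f ! t \<in> set f" using t by (rule nth_mem)
  then have "f ! t \<le> n" using fl by blast
  ultimately show "reidx n (pl f e) ! t = f ! t"
    using c t ne unfolding Cnd_def reidx_def by (auto simp: nth_pl)
qed

lemma act_sprod_DD: "act (sprod (Delta n) (Delta_t k)) m g (f, e) = (map (\<lambda>j. f ! j) g, map (\<lambda>j. e ! j) g)"
  by (simp add: sprod_def Delta_def Delta_t_def Delta_with_def Dact_def)

context WC begin

lemma prism:
  assumes w: "Rj n w u v" and u: "u \<in> S" and v: "v \<in> S"
  shows "htpy X n v u"
proof -
  have wc: "w \<in> cells X (Suc n)" "w \<in> thin X (Suc n)" using w unfolding Rj_def by auto
  have wf: "dd l w = (if l = n then u else if l = Suc n then v else C)" if "l \<le> Suc n" for l
    using w that unfolding Rj_def by auto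
  define H where "H = (\<lambda>(f, e). if Cnd n f e then act X (Suc n) (pl f e) w else act X n f u)"
  have BOT: "act X (Suc n) f w = act X n f v" if f: "mono_op m n f" for m f
  proof -
    have fs: "mono_op m (Suc n) f" using f by (auto simp: mono_op_def)
    have "Suc n \<notin> set f" using f by (auto simp: mono_op_def)
    then have "act X (Suc n) f w = act X n (reidx (Suc n) f) (dd (Suc n) w)" using FF[OF wc(1) fs] by simp
    moreover have "reidx (Suc n) f = f" using f unfolding reidx_def mono_op_def by (auto intro!: map_idI)
    ultimately show ?thesis using wf[of "Suc n"] by simp
  qed
  have OV: "act X (Suc n) (pl f e) w = act X n f u"
    if f: "mono_op m n f" and e: "mono_op m 1 e" and c: "Cnd n f e" and nn: "n \<notin> set (pl f e)" for m f e
  proof -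
    have "act X (Suc n) (pl f e) w = act X n (reidx n (pl f e)) (dd n w)"
      using FF[OF wc(1) mono_pl[OF f e], of n] nn by simp
    then show ?thesis using reidx_pl[OF f e c nn] wf[of n] by simp
  qed
  have MISS: "act X (Suc n) g w = const X x m" if g: "mono_op m (Suc n) g" "j \<notin> set g" "j < n" for m g j
    using FC[OF wc(1) g(1), of j] g wf[of j] by simp
  have Hs: "smap (sprod (Delta n) (Delta_t 1)) X H"
    unfolding smap_def
  proof (intro conjI allI impI)
    fix m a assume a: "a \<in> cells (sprod (Delta n) (Delta_t 1)) m"
    obtain f e where fe: "a = (f, e)" by (cases a)
    have f: "mono_op m n f" and e: "mono_op m 1 e" using a fe
      by (auto simp: sprod_def Delta_def Delta_t_def Delta_with_def Dcells_def)
    show "H a \<in> cells X m" unfolding H_def fe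
      using act_cells[OF wc(1) mono_pl[OF f e]] act_cells[OF sphere_cells[OF u] f] by simp
  next
    fix m k g a assume a: "a \<in> cells (sprod (Delta n) (Delta_t 1)) m" and g: "mono_op k m g"
    obtain f e where fe: "a = (f, e)" by (cases a)
    have f: "mono_op m n f" and e: "mono_op m 1 e" using a fe
      by (auto simp: sprod_def Delta_def Delta_t_def Delta_with_def Dcells_def)
    have gl: "\<forall>j\<in>set g. j < length f" using g f by (auto simp: mono_op_def less_Suc_eq_le)
    have le: "length e = length f" using e f by (simp add: mono_op_def)
    have act_pair: "act (sprod (Delta n) (Delta_t 1)) m g a = (map (\<lambda>j. f ! j) g, map (\<lambda>j. e ! j) g)"
      unfolding fe by (rule act_sprod_DD)
    have fg: "mono_op k n (map (\<lambda>j. f ! j) g)" "mono_op k 1 (map (\<lambda>j. e ! j) g)"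
      using mono_op_Dact[OF g f] mono_op_Dact[OF g e] by auto
    show "H (act (sprod (Delta n) (Delta_t 1)) m g a) = act X m g (H a)"
    proof (cases "Cnd n f e")
      case True
      then have "Cnd n (map (\<lambda>j. f ! j) g) (map (\<lambda>j. e ! j) g)" using Cnd_Dact gl by blast
      then show ?thesis unfolding act_pair unfolding H_def fe using True pl_Dact[OF gl le]
          act_comp[OF wc(1) mono_pl[OF f e] g] by simp
    next
      case False
      note nc = False
      show ?thesis
      proof (cases "Cnd n (map (\<lambda>j. f ! j) g) (map (\<lambda>j. e ! j) g)")
        case True
        have nn: "n \<notin> set (pl (map (\<lambda>j. f ! j) g) (map (\<lambda>j. e ! j) g))"
          by (rule noCnd_miss[OF f e nc gl True])
        show ?thesis unfolding act_pair unfolding H_def fe using nc True OV[OF fg True nn]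
            act_comp[OF sphere_cells[OF u] f g] by simp
      next
        case False
        then show ?thesis unfolding act_pair unfolding H_def fe using nc act_comp[OF sphere_cells[OF u] f g] by simp
      qed
    qed
  next
    fix m a assume a: "a \<in> thin (sprod (Delta n) (Delta_t 1)) m"
    obtain f e where fe: "a = (f, e)" by (cases a)
    have f: "mono_op m n f" and e: "mono_op m 1 e" and dg: "degen (Dcells n) Dact m f" using a fe
      by (auto simp: sprod_def Delta_def Delta_t_def Delta_with_def Dcells_def)
    have nd: "\<not> distinct f" using degen_not_distinct[OF dg] .
    show "H a \<in> thin X m"
    proof (cases "Cnd n f e")
      case False
      then show ?thesis unfolding H_def fe using DG[OF sphere_cells[OF u] f nd] by simp
    next
      case True
      note c = True
      show ?thesis
      proof (cases "distinct (pl f e)")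
        case False
        then show ?thesis unfolding H_def fe using c DG[OF wc(1) mono_pl[OF f e]] by simp
      next
        case True
        have fl: "length f = Suc m" using f by (simp add: mono_op_def)
        have el: "length e = Suc m" using e by (simp add: mono_op_def)
        obtain i j where ij: "i < length f" "j < length f" "i \<noteq> j" "f ! i = f ! j"
          using nd by (auto simp: distinct_conv_nth)
        have "pl f e ! i \<noteq> pl f e ! j" using True ij by (simp add: distinct_conv_nth)
        then have "e ! i \<noteq> e ! j" using ij by (simp add: nth_pl)
        moreover have "e ! i = 0 \<or> e ! i = 1" "e ! j = 0 \<or> e ! j = 1" using e01[OF e] ij fl el by auto
        ultimately have "(e ! i = 0 \<and> e ! j = 1) \<or> (e ! i = 1 \<and> e ! j = 0)" by auto
        have mem: "pl f e ! i \<in> set (pl f e)" "pl f e ! j \<in> set (pl f e)" using ij by simp_all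
        have pi: "pl f e ! i = f ! i + e ! i" "pl f e ! j = f ! j + e ! j" using ij by (simp_all add: nth_pl)
        have "f ! i = n \<and> f ! j = n"
        proof (cases "e ! i = 1")
          case True then have "f ! i = n" using c ij unfolding Cnd_def by blast
          then show ?thesis using ij by simp
        next
          case False then have "e ! j = 1" using \<open>(e ! i = 0 \<and> e ! j = 1) \<or> (e ! i = 1 \<and> e ! j = 0)\<close> by simp
          then have "f ! j = n" using c ij unfolding Cnd_def by blast
          then show ?thesis using ij by simp
        qed
        then have "{pl f e ! i, pl f e ! j} = {n, Suc n}"
          using pi \<open>(e ! i = 0 \<and> e ! j = 1) \<or> (e ! i = 1 \<and> e ! j = 0)\<close> by auto
        moreover have "{pl f e ! i, pl f e ! j} \<subseteq> set (pl f e)" using mem by simp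
        ultimately have I: "{n, Suc n} \<subseteq> set (pl f e)" by simp
        have "act X (Suc n) (pl f e) w \<in> thin X m"
        proof (rule TC[OF wc, of "{n, Suc n}"])
          show "{n, Suc n} \<subseteq> {0..Suc n}" by auto
          show "2 \<le> card {n, Suc n}" by simp
          show "dd i w = C" if "i \<le> Suc n" "i \<notin> {n, Suc n}" for i
            using wf[OF that(1)] that(2) by simp
          show "mono_op m (Suc n) (pl f e)" by (rule mono_pl[OF f e])
          show "{n, Suc n} \<subseteq> set (pl f e)" by (rule I)
        qed
        then show ?thesis unfolding H_def fe using c by simp
      qed
    qed
  qed
  have H0: "H (f, replicate (Suc m) 0) = act X n f v" if "f \<in> Dcells n m" for m f
  proof -
    have f: "mono_op m n f" using that by (simp add: Dcells_def)
    have fl: "length f = Suc m" using f by (simp add: mono_op_def)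
    have "Cnd n f (replicate (Suc m) 0)" unfolding Cnd_def using fl by (simp del: replicate_Suc)
    moreover have "pl f (replicate (Suc m) 0) = f" using fl by (intro nth_equalityI) (simp_all add: nth_pl del: replicate_Suc)
    ultimately show ?thesis unfolding H_def using BOT[OF f] by simp
  qed
  have H1: "H (f, replicate (Suc m) 1) = act X n f u" if "f \<in> Dcells n m" for m f
  proof -
    have f: "mono_op m n f" using that by (simp add: Dcells_def)
    have fl: "length f = Suc m" using f by (simp add: mono_op_def)
    show ?thesis
    proof (cases "Cnd n f (replicate (Suc m) 1)")
      case False then show ?thesis unfolding H_def by simp
    next
      case True
      then have fn: "\<forall>t<length f. f ! t = n" unfolding Cnd_def using fl by (simp del: replicate_Suc)
      have e1: "mono_op m 1 (replicate (Suc m) 1)" by (simp add: mono_op_def)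
      have "0 \<notin> set (pl f (replicate (Suc m) 1))" using fn fl by (auto simp: in_set_conv_nth nth_pl simp del: replicate_Suc)
      then have l: "act X (Suc n) (pl f (replicate (Suc m) 1)) w = const X x m"
        using MISS[OF mono_pl[OF f e1], of 0] n1 by simp
      have "0 \<notin> set f" using fn n1 by (auto simp: in_set_conv_nth)
      then have "set f \<noteq> {0..n}" by auto
      then have "act X n f u = const X x m" using sphere_const[OF u f] by simp
      then show ?thesis unfolding H_def using True l by simp
    qed
  qed
  have HB: "H (f, e) = act X n f v" if hb: "f \<in> Dcells n m" "set f \<noteq> {0..n}" "e \<in> Dcells 1 m" for m f e
  proof -
    have f: "mono_op m n f" and e: "mono_op m 1 e" using hb by (auto simp: Dcells_def)
    have fl: "length f = Suc m" "\<forall>i\<in>set f. i \<le> n" using f by (auto simp: mono_op_def)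
    have el: "length e = Suc m" using e by (simp add: mono_op_def)
    have cv: "act X n f v = const X x m" using sphere_const[OF v f hb(2)] .
    have "set f \<subseteq> {0..n}" using fl by auto
    then obtain i0 where i0: "i0 \<le> n" "i0 \<notin> set f" using hb(2) by (meson atLeastAtMost_iff subsetI subset_antisym zero_le)
    show ?thesis
    proof (cases "Cnd n f e")
      case False then show ?thesis unfolding H_def using sphere_const[OF u f hb(2)] cv by simp
    next
      case True
      show ?thesis
      proof (cases "i0 < n")
        case True
        have "i0 \<notin> set (pl f e)"
        proof
          assume "i0 \<in> set (pl f e)"
          then obtain t where t: "t < length f" "f ! t + e ! t = i0" by (auto simp: in_set_conv_nth nth_pl)
          have "e ! t = 0 \<or> e ! t = 1" using e01[OF e] t fl el by simp
          then show False
          proof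
            assume "e ! t = 0" then have "f ! t = i0" using t by simp
            then show False using i0 nth_mem[OF t(1)] by simp
          next
            assume "e ! t = 1" then have "f ! t = n" using \<open>Cnd n f e\<close> t unfolding Cnd_def by blast
            then show False using t \<open>e ! t = 1\<close> True by simp
          qed
        qed
        then show ?thesis unfolding H_def using \<open>Cnd n f e\<close> MISS[OF mono_pl[OF f e] _ True] cv by simp
      next
        case False
        then have "i0 = n" using i0 by simp
        have "e ! t = 0" if t: "t < length f" for t
        proof (rule ccontr)
          assume "e ! t \<noteq> 0"
          then have "e ! t = 1" using e01[OF e, of t] t fl el by simp
          then have "f ! t = n" using \<open>Cnd n f e\<close> t unfolding Cnd_def by blast
          then show False using i0 \<open>i0 = n\<close> t nth_mem by metis
        qed
        then have "pl f e = f" by (intro nth_equalityI) (simp_all add: nth_pl)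
        then show ?thesis unfolding H_def using \<open>Cnd n f e\<close> BOT[OF f] by simp
      qed
    qed
  qed
  show ?thesis unfolding htpy_def
  proof (intro exI[of _ H] conjI allI impI)
    show "smap (sprod (Delta n) (Delta_t 1)) X H" by (rule Hs)
    show "H (f, replicate (Suc m) 0) = act X n f v" if "f \<in> Dcells n m" for m f using H0 that .
    show "H (f, replicate (Suc m) 1) = act X n f u" if "f \<in> Dcells n m" for m f using H1 that .
    show "H (f, e) = act X n f v" if "f \<in> Dcells n m" "set f \<noteq> {0..n}" "e \<in> Dcells 1 m" for m f e
      using HB that .
  qed
qed

end

lemma rtranclp_sym:
  assumes s: "\<And>u v. r u v \<Longrightarrow> r v u" and h: "r\<^sup>*\<^sup>* a b"
  shows "r\<^sup>*\<^sup>* b a"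
  using h
proof (induction rule: rtranclp_induct)
  case base then show ?case by simp
next
  case (step y z)
  then show ?case using s converse_rtranclp_into_rtranclp by metis
qed

definition esig :: "nat \<Rightarrow> nat \<Rightarrow> nat list" where
  "esig n j = replicate (Suc j) 0 @ replicate (Suc (n - j)) 1"

lemma length_esig: "j \<le> n \<Longrightarrow> length (esig n j) = Suc (Suc n)"
  by (simp add: esig_def)

lemma nth_esig: "j \<le> n \<Longrightarrow> v < Suc (Suc n) \<Longrightarrow> esig n j ! v = (if v \<le> j then 0 else 1)"
  by (simp add: esig_def nth_append del: replicate_Suc)

lemma mono_esig: "j \<le> n \<Longrightarrow> mono_op (Suc n) 1 (esig n j)"
  by (auto simp: mono_op_def esig_def sorted_append simp del: replicate_Suc)

lemma esig_face_same:
  assumes "j < n"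
  shows "map (\<lambda>t. esig n j ! t) (face (Suc n) (Suc j)) = map (\<lambda>t. esig n (Suc j) ! t) (face (Suc n) (Suc j))"
  using assms by (intro nth_equalityI) (auto simp: length_face nth_face nth_esig)

lemma esig_face0: "map (\<lambda>t. esig n 0 ! t) (face (Suc n) 0) = replicate (Suc n) 1"
  by (intro nth_equalityI) (auto simp: length_face nth_face nth_esig simp del: replicate_Suc)

lemma esig_faceN: "map (\<lambda>t. esig n n ! t) (face (Suc n) (Suc n)) = replicate (Suc n) 0"
  by (intro nth_equalityI) (auto simp: length_face nth_face nth_esig simp del: replicate_Suc)

context WC begin

definition Rn where "Rn u v \<longleftrightarrow> (\<exists>w. Rj n w u v)"
definition rr where "rr u v \<longleftrightarrow> u \<in> S \<and> v \<in> S \<and> (Rn u v \<or> Rn v u)"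
abbreviation Eq where "Eq \<equiv> rr\<^sup>*\<^sup>*"

lemma rr_sym: "rr u v \<Longrightarrow> rr v u" unfolding rr_def by auto

lemma Eq_sym: "Eq u v \<Longrightarrow> Eq v u" using rtranclp_sym[of rr] rr_sym by blast

lemma htpy_Eq:
  assumes h: "htpy X n a b" and a: "a \<in> S" and b: "b \<in> S"
  shows "Eq a b"
proof -
  obtain H where Hs: "smap (sprod (Delta n) (Delta_t 1)) X H"
    and H0: "\<And>m f. f \<in> Dcells n m \<Longrightarrow> H (f, replicate (Suc m) 0) = act X n f a"
    and H1: "\<And>m f. f \<in> Dcells n m \<Longrightarrow> H (f, replicate (Suc m) 1) = act X n f b"
    and HB: "\<And>m f e. f \<in> Dcells n m \<Longrightarrow> set f \<noteq> {0..n} \<Longrightarrow> e \<in> Dcells 1 m \<Longrightarrow> H (f, e) = act X n f a"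
    using h unfolding htpy_def by blast
  have Hc: "\<And>m f e. f \<in> Dcells n m \<Longrightarrow> e \<in> Dcells 1 m \<Longrightarrow> H (f, e) \<in> cells X m"
    using Hs unfolding smap_def by (auto simp: sprod_def Delta_def Delta_t_def Delta_with_def)
  have Hn: "\<And>m k g f e. f \<in> Dcells n m \<Longrightarrow> e \<in> Dcells 1 m \<Longrightarrow> mono_op k m g \<Longrightarrow>
      H (map (\<lambda>j. f ! j) g, map (\<lambda>j. e ! j) g) = act X m g (H (f, e))"
  proof -
    fix m k g f e assume fe: "f \<in> Dcells n m" "e \<in> Dcells 1 m" and g: "mono_op k m g"
    have "(f, e) \<in> cells (sprod (Delta n) (Delta_t 1)) m" using fe
      by (simp add: sprod_def Delta_def Delta_t_def Delta_with_def)
    then have "H (act (sprod (Delta n) (Delta_t 1)) m g (f, e)) = act X m g (H (f, e))"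
      using Hs g unfolding smap_def by blast
    then show "H (map (\<lambda>j. f ! j) g, map (\<lambda>j. e ! j) g) = act X m g (H (f, e))"
      by (simp add: act_sprod_DD)
  qed
  have Ht: "\<And>m f e. f \<in> thin (Delta n) m \<Longrightarrow> e \<in> thin (Delta_t 1) m \<Longrightarrow> H (f, e) \<in> thin X m"
    using Hs unfolding smap_def by (auto simp: sprod_def)
  define fa where "fa j l = map (\<lambda>t. sdeg n j ! t) (face (Suc n) l)" for j l
  define ea where "ea j l = map (\<lambda>t. esig n j ! t) (face (Suc n) l)" for j l
  define w where "w j = H (sdeg n j, esig n j)" for j
  define cc where "cc j = (if j \<le> n then H (fa j j, ea j j) else a)" for j
  have fam: "fa j l \<in> Dcells n n" if "j \<le> n" "l \<le> Suc n" for j l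
    unfolding fa_def Dcells_def using mono_op_Dact[OF mono_op_face[OF that(2)] mono_op_sdeg[OF that(1)]] by simp
  have eam: "ea j l \<in> Dcells 1 n" if "j \<le> n" "l \<le> Suc n" for j l
    unfolding ea_def Dcells_def using mono_op_Dact[OF mono_op_face[OF that(2)] mono_esig[OF that(1)]] by simp
  have sdc: "sdeg n j \<in> Dcells n (Suc n)" "esig n j \<in> Dcells 1 (Suc n)" if "j \<le> n" for j
    using mono_op_sdeg[OF that] mono_esig[OF that] by (auto simp: Dcells_def)
  have wc: "w j \<in> cells X (Suc n)" if "j \<le> n" for j unfolding w_def using Hc sdc[OF that] by blast
  have wt: "w j \<in> thin X (Suc n)" if j: "j \<le> n" for j
  proof -
    have "degen (Dcells n) Dact (Suc n) (sdeg n j)"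
      unfolding degen_def using sdc[OF j] mono_op_sdeg[OF j] mono_op_id[of n]
      by (intro conjI exI[of _ n] exI[of _ "sdeg n j"] exI[of _ "[0..<Suc n]"])
         (auto simp: Dcells_def Dact_def map_nth_id mono_op_def simp del: upt_Suc)
    then have f: "sdeg n j \<in> thin (Delta n) (Suc n)" using sdc[OF j] by (simp add: Delta_def Delta_with_def)
    have m01: "mono_op 1 1 [0..<Suc 1]" by (rule mono_op_id)
    have "degen (Dcells 1) Dact (Suc n) (esig n j)"
      unfolding degen_def using sdc[OF j] mono_esig[OF j] m01 n1
      by (intro conjI exI[of _ 1] exI[of _ "esig n j"] exI[of _ "[0..<Suc 1]"])
         (auto simp: Dcells_def Dact_def map_nth_id mono_op_def simp del: upt_Suc)
    then have e: "esig n j \<in> thin (Delta_t 1) (Suc n)" using sdc[OF j] by (simp add: Delta_t_def Delta_with_def)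
    show ?thesis unfolding w_def by (rule Ht[OF f e])
  qed
  have wf: "dd l (w j) = H (fa j l, ea j l)" if "j \<le> n" "l \<le> Suc n" for j l
    unfolding w_def fa_def ea_def using Hn[OF sdc[OF that(1)] mono_op_face[OF that(2)]] by simp
  have faid: "fa j l = [0..<Suc n]" if "j \<le> n" "l = j \<or> l = Suc j" for j l
    unfolding fa_def using sdeg_face_id[OF that] .
  have ccS: "cc j \<in> S" for j
  proof (cases "j \<le> n")
    case False then show ?thesis using a unfolding cc_def by simp
  next
    case True
    have ccj: "cc j = H ([0..<Suc n], ea j j)" unfolding cc_def using True faid[OF True] by simp
    have e: "ea j j \<in> Dcells 1 n" using eam True by simp
    have idc: "[0..<Suc n] \<in> Dcells n n" by (simp add: Dcells_def mono_op_id del: upt_Suc)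
    show ?thesis
    proof (rule sphere_I)
      show "cc j \<in> cells X n" unfolding ccj using Hc[OF idc e] .
      fix l assume l: "l \<le> n"
      have fl: "mono_op (n - 1) n (face n l)" using mono_face_n[OF l] .
      have "act X n (face n l) (cc j) = H (map (\<lambda>t. [0..<Suc n] ! t) (face n l), map (\<lambda>t. ea j j ! t) (face n l))"
        unfolding ccj using Hn[OF idc e fl] by simp
      also have "map (\<lambda>t. [0..<Suc n] ! t) (face n l) = face n l"
      proof -
        have "\<forall>i\<in>set (face n l). i \<le> n" using set_face[OF l] by simp
        then show ?thesis by (rule map_nth_id)
      qed
      also have "H (face n l, map (\<lambda>t. ea j j ! t) (face n l)) = act X n (face n l) a"
      proof (rule HB)
        show "face n l \<in> Dcells n (n - 1)" using fl by (simp add: Dcells_def)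
        have "l \<notin> set (face n l)" using set_face[OF l] by simp
        moreover have "l \<in> {0..n}" using l by simp
        ultimately show "set (face n l) \<noteq> {0..n}" by metis
        show "map (\<lambda>t. ea j j ! t) (face n l) \<in> Dcells 1 (n - 1)"
          using mono_op_Dact[OF fl] e by (simp add: Dcells_def)
      qed
      also have "\<dots> = const X x (n - 1)" using sphere_face[OF a l] .
      finally show "act X n (face n l) (cc j) = const X x (n - 1)" .
    qed
  qed
  have step: "Rj j (w j) (cc j) (cc (Suc j))" if j: "j \<le> n" for j
  proof -
    have f1: "dd j (w j) = cc j" using wf[OF j] j unfolding cc_def by simp
    have f2: "dd (Suc j) (w j) = cc (Suc j)"
    proof (cases "j < n")
      case True
      have "fa j (Suc j) = fa (Suc j) (Suc j)" using faid True by simp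
      moreover have "ea j (Suc j) = ea (Suc j) (Suc j)" unfolding ea_def using esig_face_same[OF True] .
      ultimately show ?thesis using wf[OF j] True unfolding cc_def by simp
    next
      case False
      then have jn: "j = n" using j by simp
      have "fa n (Suc n) = [0..<Suc n]" using faid by simp
      moreover have "ea n (Suc n) = replicate (Suc n) 0" unfolding ea_def using esig_faceN .
      moreover have "[0..<Suc n] \<in> Dcells n n" by (simp add: Dcells_def mono_op_id del: upt_Suc)
      ultimately have "dd (Suc n) (w n) = act X n [0..<Suc n] a" using wf[of n "Suc n"] H0 by simp
      then show ?thesis using jn act_id[OF sphere_cells[OF a]] unfolding cc_def by (simp del: upt_Suc)
    qed
    have f3: "dd l (w j) = C" if l: "l \<le> Suc n" "l \<noteq> j" "l \<noteq> Suc j" for l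
    proof -
      have "set (fa j l) \<noteq> {0..n}" unfolding fa_def by (rule sdeg_face_miss[OF j l])
      then have "H (fa j l, ea j l) = act X n (fa j l) a" using HB fam[OF j l(1)] eam[OF j l(1)] by blast
      also have "\<dots> = C" using sphere_const[OF a, of n "fa j l"] fam[OF j l(1)] \<open>set (fa j l) \<noteq> {0..n}\<close>
        by (simp add: Dcells_def)
      finally show ?thesis using wf[OF j l(1)] by simp
    qed
    show ?thesis unfolding Rj_def using wc[OF j] wt[OF j] f1 f2 f3 by blast
  qed
  have "Eq (cc 0) (cc j)" if "j \<le> Suc n" for j
    using that
  proof (induction j)
    case 0 then show ?case by simp
  next
    case (Suc j)
    then have jn: "j \<le> n" by simp
    obtain w' where "Rj n w' (cc j) (cc (Suc j))" using Rj_to_n[OF jn ccS step[OF jn]] by blast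
    then have "rr (cc j) (cc (Suc j))" unfolding rr_def Rn_def using ccS by blast
    then show ?case using Suc by (meson rtranclp.rtrancl_into_rtrancl Suc_leD)
  qed
  then have "Eq (cc 0) (cc (Suc n))" by simp
  moreover have "cc (Suc n) = a" unfolding cc_def by simp
  moreover have "cc 0 = b"
  proof -
    have "fa 0 0 = [0..<Suc n]" using faid by simp
    moreover have "ea 0 0 = replicate (Suc n) 1" unfolding ea_def using esig_face0 .
    moreover have "[0..<Suc n] \<in> Dcells n n" by (simp add: Dcells_def mono_op_id del: upt_Suc)
    ultimately show ?thesis unfolding cc_def using H1 act_id[OF sphere_cells[OF b]] by (simp del: upt_Suc)
  qed
  ultimately show ?thesis using Eq_sym by simp
qed

end

context WC begin

abbreviation hr where "hr \<equiv> hrel X n x"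
abbreviation hc where "hc \<equiv> hclass X n x"

definition Rel where "Rel u v \<longleftrightarrow> u \<in> S \<and> v \<in> S \<and> (htpy X n u v \<or> htpy X n v u)"

lemma hr_iff: "(a, b) \<in> hr \<longleftrightarrow> a \<in> S \<and> b \<in> S \<and> Rel\<^sup>*\<^sup>* a b"
proof -
  have "(\<lambda>u v. u \<in> S \<and> v \<in> S \<and> (htpy X n u v \<or> htpy X n v u)) = Rel" by (auto simp: Rel_def fun_eq_iff)
  then show ?thesis unfolding hrel_def by simp
qed

lemma Rel_sym: "Rel u v \<Longrightarrow> Rel v u" unfolding Rel_def by auto

lemma hr_equiv: "equiv S hr"
proof (rule equivI)
  show "hr \<subseteq> S \<times> S"
  proof (rule subrelI)
    fix a b assume "(a, b) \<in> hr" then show "(a, b) \<in> S \<times> S" using hr_iff by blast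
  qed
  show "refl_on S hr" unfolding refl_on_def
  proof
    fix a assume "a \<in> S" then show "(a, a) \<in> hr" using hr_iff by blast
  qed
  show "sym hr" unfolding sym_def
  proof (intro allI impI)
    fix a b assume "(a, b) \<in> hr"
    then have h: "a \<in> S" "b \<in> S" "Rel\<^sup>*\<^sup>* a b" using hr_iff by auto
    have "Rel\<^sup>*\<^sup>* b a" by (rule rtranclp_sym[of Rel, OF Rel_sym h(3)])
    then show "(b, a) \<in> hr" using h hr_iff by simp
  qed
  show "trans hr" unfolding trans_def
  proof (intro allI impI)
    fix a b c assume "(a, b) \<in> hr" "(b, c) \<in> hr"
    then have h: "a \<in> S" "c \<in> S" "Rel\<^sup>*\<^sup>* a b" "Rel\<^sup>*\<^sup>* b c" using hr_iff by auto
    have "Rel\<^sup>*\<^sup>* a c" by (rule rtranclp_trans[OF h(3,4)])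
    then show "(a, c) \<in> hr" using h hr_iff by simp
  qed
qed

lemma hc_eq_iff: "a \<in> S \<Longrightarrow> b \<in> S \<Longrightarrow> hc a = hc b \<longleftrightarrow> (a, b) \<in> hr"
  unfolding hclass_def by (rule eq_equiv_class_iff[OF hr_equiv])

lemma hr_sym: "(a, b) \<in> hr \<Longrightarrow> (b, a) \<in> hr"
  using hr_equiv unfolding equiv_def by (meson symD)

lemma hr_trans: "(a, b) \<in> hr \<Longrightarrow> (b, c) \<in> hr \<Longrightarrow> (a, c) \<in> hr"
  using hr_equiv unfolding equiv_def by (meson transD)

lemma hr_refl: "a \<in> S \<Longrightarrow> (a, a) \<in> hr"
  using hr_iff by simp

lemma Rn_hr: "Rn u v \<Longrightarrow> u \<in> S \<Longrightarrow> v \<in> S \<Longrightarrow> (u, v) \<in> hr"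
proof -
  assume "Rn u v" "u \<in> S" "v \<in> S"
  then obtain w where "Rj n w u v" unfolding Rn_def by blast
  then have "htpy X n v u" using prism \<open>u \<in> S\<close> \<open>v \<in> S\<close> by blast
  then have "Rel u v" unfolding Rel_def using \<open>u \<in> S\<close> \<open>v \<in> S\<close> by blast
  then show ?thesis using hr_iff \<open>u \<in> S\<close> \<open>v \<in> S\<close> by blast
qed

lemma hr_Eq: "(a, b) \<in> hr \<Longrightarrow> Eq a b"
proof -
  assume "(a, b) \<in> hr"
  then have "Rel\<^sup>*\<^sup>* a b" using hr_iff by blast
  then show "Eq a b"
  proof (induction rule: rtranclp_induct)
    case base then show ?case by simp
  next
    case (step y z)
    then have "y \<in> S" "z \<in> S" "htpy X n y z \<or> htpy X n z y" unfolding Rel_def by auto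
    then have "Eq y z" using htpy_Eq Eq_sym by blast
    then show ?case using step.IH rtranclp_trans by metis
  qed
qed

lemma Eq_hr: "Eq a b \<Longrightarrow> a \<in> S \<Longrightarrow> (a, b) \<in> hr"
proof (induction rule: rtranclp_induct)
  case base then show ?case using hr_refl by simp
next
  case (step y z)
  then have yz: "y \<in> S" "z \<in> S" "Rn y z \<or> Rn z y" unfolding rr_def by auto
  then have "(y, z) \<in> hr" using Rn_hr hr_sym by blast
  then show ?case using step hr_trans by blast
qed

abbreviation cp where "cp \<theta> \<equiv> \<theta> (face (Suc n) n)"

lemma WD0:
  assumes "a \<in> S" "b \<in> S" "filler X n x a b \<theta>" "filler X n x a b \<theta>'"
  shows "(cp \<theta>, cp \<theta>') \<in> hr"
proof -
  obtain w where "Rj n w (cp \<theta>) (cp \<theta>')" using appW[OF Rj_refl[OF assms(1)] assms(3,4)] by blast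
  then have "Rn (cp \<theta>) (cp \<theta>')" unfolding Rn_def by blast
  then show ?thesis using Rn_hr filler_comp_S[OF assms(3) assms(1,2)] filler_comp_S[OF assms(4) assms(1,2)] by blast
qed

lemma WA:
  assumes E: "Eq a a'" and a: "a \<in> S" and b: "b \<in> S" and t: "filler X n x a b \<theta>"
  shows "filler X n x a' b \<theta>' \<Longrightarrow> (cp \<theta>, cp \<theta>') \<in> hr"
  using E
proof (induction arbitrary: \<theta>' rule: rtranclp_induct)
  case base then show ?case using WD0[OF a b t] by blast
next
  case (step y z)
  have yz: "y \<in> S" "z \<in> S" "Rn y z \<or> Rn z y" using step.hyps(2) unfolding rr_def by auto
  obtain \<theta>y where ty: "filler X n x y b \<theta>y" using filler_exists[OF yz(1) b] by blast
  have h1: "(cp \<theta>, cp \<theta>y) \<in> hr" using step.IH[OF ty] .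
  have cS: "cp \<theta>y \<in> S" "cp \<theta>' \<in> S" using filler_comp_S[OF ty yz(1) b] filler_comp_S[OF step.prems yz(2) b] by auto
  have "(cp \<theta>y, cp \<theta>') \<in> hr"
  proof (cases "Rn y z")
    case True
    then obtain w where "Rj n w y z" unfolding Rn_def by blast
    then obtain w' where "Rj n w' (cp \<theta>y) (cp \<theta>')" using appW[OF _ ty step.prems] by blast
    then have "Rn (cp \<theta>y) (cp \<theta>')" unfolding Rn_def by blast
    then show ?thesis using Rn_hr cS by blast
  next
    case False
    then obtain w where "Rj n w z y" using yz unfolding Rn_def by blast
    then obtain w' where "Rj n w' (cp \<theta>') (cp \<theta>y)" using appW[OF _ step.prems ty] by blast
    then have "Rn (cp \<theta>') (cp \<theta>y)" unfolding Rn_def by blast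
    then show ?thesis using Rn_hr cS hr_sym by blast
  qed
  then show ?case using h1 hr_trans by blast
qed

lemma WB:
  assumes E: "Eq b b'" and a: "a \<in> S" and b: "b \<in> S" and t: "filler X n x a b \<theta>"
  shows "filler X n x a b' \<theta>' \<Longrightarrow> (cp \<theta>, cp \<theta>') \<in> hr"
  using E
proof (induction arbitrary: \<theta>' rule: rtranclp_induct)
  case base then show ?case using WD0[OF a b t] by blast
next
  case (step y z)
  have yz: "y \<in> S" "z \<in> S" "Rn y z \<or> Rn z y" using step.hyps(2) unfolding rr_def by auto
  obtain \<theta>y where ty: "filler X n x a y \<theta>y" using filler_exists[OF a yz(1)] by blast
  have h1: "(cp \<theta>, cp \<theta>y) \<in> hr" using step.IH[OF ty] .
  have "(cp \<theta>y, cp \<theta>') \<in> hr"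
  proof (cases "Rn y z")
    case True
    then obtain w where "Rj n w y z" unfolding Rn_def by blast
    then obtain \<theta>'' where t'': "filler X n x a y \<theta>''" "cp \<theta>'' = cp \<theta>'" using appB[OF a _ step.prems] by blast
    then show ?thesis using WD0[OF a yz(1) ty t''(1)] by simp
  next
    case False
    then obtain w where "Rj n w z y" using yz unfolding Rn_def by blast
    then obtain \<theta>'' where t'': "filler X n x a z \<theta>''" "cp \<theta>'' = cp \<theta>y" using appB[OF a _ ty] by blast
    then show ?thesis using WD0[OF a yz(2) step.prems t''(1)] hr_sym by simp
  qed
  then show ?case using h1 hr_trans by blast
qed

lemma WD:
  assumes S: "a \<in> S" "b \<in> S" "a' \<in> S" "b' \<in> S"
    and t: "filler X n x a b \<theta>" "filler X n x a' b' \<theta>'"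
    and ha: "hc a = hc a'" and hb: "hc b = hc b'"
  shows "hc (cp \<theta>) = hc (cp \<theta>')"
proof -
  have Ea: "Eq a a'" using hr_Eq hc_eq_iff[OF S(1,3)] ha by blast
  have Eb: "Eq b b'" using hr_Eq hc_eq_iff[OF S(2,4)] hb by blast
  obtain \<theta>'' where t'': "filler X n x a' b \<theta>''" using filler_exists[OF S(3,2)] by blast
  have "(cp \<theta>, cp \<theta>'') \<in> hr" using WA[OF Ea S(1,2) t(1) t''] .
  moreover have "(cp \<theta>'', cp \<theta>') \<in> hr" using WB[OF Eb S(3) S(2) t'' t(2)] .
  ultimately have "(cp \<theta>, cp \<theta>') \<in> hr" using hr_trans by blast
  moreover have "cp \<theta> \<in> S" "cp \<theta>' \<in> S" using filler_comp_S[OF t(1) S(1,2)] filler_comp_S[OF t(2) S(3,4)] by auto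
  ultimately show ?thesis using hc_eq_iff by blast
qed

lemma mem_hc: "a \<in> S \<Longrightarrow> a' \<in> hc a \<Longrightarrow> a' \<in> S \<and> hc a = hc a'"
proof -
  assume a: "a \<in> S" and m: "a' \<in> hc a"
  then have "(a, a') \<in> hr" unfolding hclass_def by simp
  then have "a' \<in> S" using hr_iff by blast
  then show ?thesis using hc_eq_iff[OF a] \<open>(a, a') \<in> hr\<close> by blast
qed

lemma mult_eq:
  assumes a: "a \<in> S" and b: "b \<in> S" and t: "filler X n x a b \<theta>"
  shows "tau_mult X n x (hc a) (hc b) = hc (cp \<theta>)"
  unfolding tau_mult_def
proof (rule the_equality)
  show "\<exists>a'\<in>hc a. \<exists>b'\<in>hc b. \<exists>\<theta>'. filler X n x a' b' \<theta>' \<and> hc (cp \<theta>) = hc (cp \<theta>')"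
    using hr_refl[OF a] hr_refl[OF b] t unfolding hclass_def by blast
next
  fix Cl assume "\<exists>a'\<in>hc a. \<exists>b'\<in>hc b. \<exists>\<theta>'. filler X n x a' b' \<theta>' \<and> Cl = hc (cp \<theta>')"
  then obtain a' b' \<theta>' where m: "a' \<in> hc a" "b' \<in> hc b" "filler X n x a' b' \<theta>'" "Cl = hc (cp \<theta>')" by blast
  have "a' \<in> S" "hc a = hc a'" using mem_hc[OF a m(1)] by auto
  moreover have "b' \<in> S" "hc b = hc b'" using mem_hc[OF b m(2)] by auto
  ultimately
  show "Cl = hc (cp \<theta>)" using WD[OF a b _ _ t m(3)] m(4) by simp
qed

lemma tau_elem: "A \<in> tau X n x \<Longrightarrow> \<exists>a\<in>S. A = hc a"
  unfolding tau_def hclass_def by (auto elim!: quotientE)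

lemma hc_tau: "a \<in> S \<Longrightarrow> hc a \<in> tau X n x"
  unfolding tau_def hclass_def by (rule quotientI)

lemma main_monoid: "monoid (tau_monoid X n x)"
proof (rule monoidI)
  fix A B assume "A \<in> carrier (tau_monoid X n x)" "B \<in> carrier (tau_monoid X n x)"
  then have "A \<in> tau X n x" "B \<in> tau X n x" by (simp_all add: tau_monoid_def)
  then obtain a b where ab: "a \<in> S" "b \<in> S" "A = hc a" "B = hc b" using tau_elem by meson
  obtain \<theta> where t: "filler X n x a b \<theta>" using filler_exists ab by blast
  show "A \<otimes>\<^bsub>tau_monoid X n x\<^esub> B \<in> carrier (tau_monoid X n x)"
    using mult_eq[OF ab(1,2) t] hc_tau filler_comp_S[OF t ab(1,2)] ab by (simp add: tau_monoid_def)
next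
  show "\<one>\<^bsub>tau_monoid X n x\<^esub> \<in> carrier (tau_monoid X n x)"
    using hc_tau[OF const_sphere] by (simp add: tau_monoid_def)
next
  fix A B D assume "A \<in> carrier (tau_monoid X n x)" "B \<in> carrier (tau_monoid X n x)" "D \<in> carrier (tau_monoid X n x)"
  then have "A \<in> tau X n x" "B \<in> tau X n x" "D \<in> tau X n x" by (simp_all add: tau_monoid_def)
  then obtain a b c where abc: "a \<in> S" "b \<in> S" "c \<in> S" "A = hc a" "B = hc b" "D = hc c"
    using tau_elem by meson
  obtain \<theta>1 where t1: "filler X n x a b \<theta>1" using filler_exists abc by blast
  have p: "cp \<theta>1 \<in> S" using filler_comp_S[OF t1] abc by simp
  obtain \<theta>2 where t2: "filler X n x (cp \<theta>1) c \<theta>2" using filler_exists p abc by blast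
  obtain \<theta>3 where t3: "filler X n x b c \<theta>3" using filler_exists abc by blast
  have r: "cp \<theta>3 \<in> S" using filler_comp_S[OF t3] abc by simp
  obtain \<theta>4 where t4: "filler X n x a (cp \<theta>3) \<theta>4" "cp \<theta>4 = cp \<theta>2" using appA[OF t1 t2 t3] by blast
  have "tau_mult X n x (tau_mult X n x A B) D = hc (cp \<theta>2)"
    using mult_eq[OF abc(1,2) t1] mult_eq[OF p abc(3) t2] abc by simp
  moreover have "tau_mult X n x A (tau_mult X n x B D) = hc (cp \<theta>4)"
    using mult_eq[OF abc(2,3) t3] mult_eq[OF abc(1) r t4(1)] abc by simp
  ultimately show "A \<otimes>\<^bsub>tau_monoid X n x\<^esub> B \<otimes>\<^bsub>tau_monoid X n x\<^esub> D =
      A \<otimes>\<^bsub>tau_monoid X n x\<^esub> (B \<otimes>\<^bsub>tau_monoid X n x\<^esub> D)"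
    using t4(2) by (simp add: tau_monoid_def)
next
  fix A assume "A \<in> carrier (tau_monoid X n x)"
  then have "A \<in> tau X n x" by (simp add: tau_monoid_def)
  then obtain b where b: "b \<in> S" "A = hc b" using tau_elem by meson
  have "tau_mult X n x (hc C) (hc b) = hc b"
    using mult_eq[OF const_sphere b(1), of "\<lambda>f. act X (Suc n) f (sd n b)"] unit_left[OF b(1)] by simp
  then show "\<one>\<^bsub>tau_monoid X n x\<^esub> \<otimes>\<^bsub>tau_monoid X n x\<^esub> A = A" using b by (simp add: tau_monoid_def)
next
  fix A assume "A \<in> carrier (tau_monoid X n x)"
  then have "A \<in> tau X n x" by (simp add: tau_monoid_def)
  then obtain a where a: "a \<in> S" "A = hc a" using tau_elem by meson
  have "tau_mult X n x (hc a) (hc C) = hc a"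
    using mult_eq[OF a(1) const_sphere, of "\<lambda>f. act X (Suc n) f (sd (n - 1) a)"] unit_right[OF a(1)] by simp
  then show "A \<otimes>\<^bsub>tau_monoid X n x\<^esub> \<one>\<^bsub>tau_monoid X n x\<^esub> = A" using a by (simp add: tau_monoid_def)
qed

end

theorem mainTheorem4:
  fixes X :: "'a sset" and x :: 'a and n :: nat
  assumes "weak_complicial X" and "x \<in> cells X 0" and "1 \<le> n"
  shows "(\<forall>a\<in>sphere X n x. \<forall>b\<in>sphere X n x. \<exists>\<theta>. filler X n x a b \<theta>) \<and>
         (\<forall>a b \<theta> a' b' \<theta>'. a \<in> sphere X n x \<longrightarrow> b \<in> sphere X n x \<longrightarrow>
            a' \<in> sphere X n x \<longrightarrow> b' \<in> sphere X n x \<longrightarrow>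
            filler X n x a b \<theta> \<longrightarrow> filler X n x a' b' \<theta>' \<longrightarrow>
            hclass X n x a = hclass X n x a' \<longrightarrow> hclass X n x b = hclass X n x b' \<longrightarrow>
            hclass X n x (\<theta> (face (Suc n) n)) = hclass X n x (\<theta>' (face (Suc n) n))) \<and>
         monoid (tau_monoid X n x)"
proof -
  have W: "WC X x n" using assms by (simp add: WC_def)
  show ?thesis
  proof (intro conjI ballI allI impI)
    fix a b assume "a \<in> sphere X n x" "b \<in> sphere X n x"
    then show "\<exists>\<theta>. filler X n x a b \<theta>" by (rule WC.filler_exists[OF W])
  next
    fix a b \<theta> a' b' \<theta>'
    assume h: "a \<in> sphere X n x" "b \<in> sphere X n x" "a' \<in> sphere X n x" "b' \<in> sphere X n x"
      "filler X n x a b \<theta>" "filler X n x a' b' \<theta>'" "hclass X n x a = hclass X n x a'" "hclass X n x b = hclass X n x b'"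
    show "hclass X n x (\<theta> (face (Suc n) n)) = hclass X n x (\<theta>' (face (Suc n) n))"
      by (rule WC.WD[OF W h])
  next
    show "monoid (tau_monoid X n x)" by (rule WC.main_monoid[OF W])
  qed
qed

end
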